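(* For every $n\ge 1$ and every $T\in\mathcal{T}_n$, $\varphi(\Xi_{\mathrm{poset}}(T))=\Xi_{\mathrm{bounce}}(T)$; that is, $\varphi\circ\Xi_{\mathrm{poset}}=\Xi_{\mathrm{bounce}}$. Consequently $\varphi$ is a bijection from $\mathcal{P}_n$ to $\mathcal{D}_n$.
   Context: For a finite set $S=\{x_1<\dots<x_n\}\subset\mathbb{R}$, define the partial order $\preceq_S$ on $[n]$ by $i\prec_S j$ iff $x_i+1<x_j$. A unit interval poset is a poset isomorphic to some $([n],\preceq_S)$; $\mathcal{P}_n$ is the set of unit interval posets with $n$ elements up to isomorphism. A plane tree is either a single node, or a root joined to an ordered (left-to-right) sequence of plane trees whose roots are its children; $\mathcal{T}_n$ is the set of plane trees with $n$ non-root nodes; the depth of a node is its distance to the root. A Dyck path of size $n$ is a lattice path from $(0,0)$ to $(n,n)$ with steps $\uparrow=(0,1)$ and $\rightarrow=(1,0)$ staying weakly above $y=x$; $\mathcal{D}_n$ is their set. $\Xi_{\mathrm{poset}}$: for $T\in\mathcal{T}_n$ with maximal number of children $m$, for a non-root node $u$ let $c(u)=i$ if $u$ is the $i$-th child of its parent counted from right to left; with $u_0=\text{root},\dots,u_{d(u)}=u$ the root-to-$u$ path set $x_u=d(u)+\sum_{i=1}^{d(u)}c(u_i)(m+2)^{-i}$; with $S=\{x_u\}$, $\Xi_{\mathrm{poset}}(T)=([n],\preceq_S)$. $\Xi_{\mathrm{bounce}}$: for $T\in\mathcal{T}_n$, list the nodes by increasing depth and, within the same depth, from right to left; let $w_0$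 (the root), $w_1,\dots,w_{n-1}$ be the first $n$ nodes of this list. $\Xi_{\mathrm{bounce}}(T)$ is the Dyck path whose number of north steps on the line $x=k$ equals the number of children of $w_k$, for $0\le k\le n-1$ (i.e. the path $\uparrow^{e_0}\rightarrow\uparrow^{e_1}\rightarrow\cdots\uparrow^{e_{n-1}}\rightarrow$ with $e_k$ the number of children of $w_k$). It is known that $\Xi_{\mathrm{bounce}}:\mathcal{T}_n\to\mathcal{D}_n$ is a bijection. $\varphi$: for a unit interval poset $P=([n],\preceq_S)$, choose the starting set $S$ so that $S\cap S^+=\varnothing$ where $S^+=\{x+1: x\in S\}$; write $S\cup S^+=\{y_1<\dots<y_{2n}\}$; $\varphi(P)$ is the Dyck path whose $i$-th step is $\uparrow$ if $y_i\in S$ and $\rightarrow$ otherwise. (It is known that this does not depend on the choice of $S$, so $\varphi$ is a well-defined map $\mathcal{P}_n\to\mathcal{D}_n$.) *)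

theory Defs
  imports Complex_Main
begin

datatype ptree = Node "ptree list"

fun children :: "ptree \<Rightarrow> ptree list" where
  "children (Node ts) = ts"

fun num_nodes :: "ptree \<Rightarrow> nat" where
  "num_nodes (Node ts) = (\<Sum>t\<leftarrow>ts. Suc (num_nodes t))"

fun max_children :: "ptree \<Rightarrow> nat" where
  "max_children (Node ts) = fold max (map max_children ts) (length ts)"

text \<open>The non-root nodes, each encoded by the list [c(u_1),...,c(u_d)] along its
  root-to-node path, where c(v) = i if v is the i-th child of its parent counted
  from right to left (starting at 1).\<close>
fun node_codes :: "ptree \<Rightarrow> nat list list"
and node_codes_list :: "ptree list \<Rightarrow> nat list list" where
  "node_codes (Node ts) = node_codes_list ts"
| "node_codes_list [] = []"
| "node_codes_list (t # ts) =
     (let c = Suc (length ts) in [c] # map (\<lambda>p. c # p) (node_codes t))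
     @ node_codes_list ts"

definition node_value :: "nat \<Rightarrow> nat list \<Rightarrow> real" where
  "node_value m cs = real (length cs)
     + (\<Sum>i=1..length cs. real (cs ! (i - 1)) * (real m + 2) powi (- int i))"

definition tree_set :: "ptree \<Rightarrow> real set" where
  "tree_set T = node_value (max_children T) ` set (node_codes T)"

definition uip_rel :: "real set \<Rightarrow> (nat \<times> nat) set" where
  "uip_rel S = (let n = card S; x = (\<lambda>i. sorted_list_of_set S ! (i - 1)) in
     {(i, j). i \<in> {1..n} \<and> j \<in> {1..n} \<and> (i = j \<or> x i + 1 < x j)})"

definition poset_iso :: "nat \<Rightarrow> (nat \<times> nat) set \<Rightarrow> (nat \<times> nat) set \<Rightarrow> bool" where
  "poset_iso n P Q \<longleftrightarrow> (\<exists>f. bij_betw f {1..n} {1..n} \<and>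
      (\<forall>i\<in>{1..n}. \<forall>j\<in>{1..n}. (i, j) \<in> P \<longleftrightarrow> (f i, f j) \<in> Q))"

definition iso_class :: "nat \<Rightarrow> (nat \<times> nat) set \<Rightarrow> (nat \<times> nat) set set" where
  "iso_class n P = {Q. Q \<subseteq> {1..n} \<times> {1..n} \<and> poset_iso n P Q}"

text \<open>\<P>_n: unit interval posets with n elements up to isomorphism.\<close>
definition UIP :: "nat \<Rightarrow> (nat \<times> nat) set set set" where
  "UIP n = {iso_class n (uip_rel S) | S. finite S \<and> card S = n}"

text \<open>A Dyck path is a list of steps, True = north step, False = east step.\<close>
definition Dyck :: "nat \<Rightarrow> bool list set" where
  "Dyck n = {w. length w = 2 * n \<and> count_list w True = n \<and>
     (\<forall>k\<le>length w. count_list (take k w) False \<le> count_list (take k w) True)}"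

definition shift1 :: "real set \<Rightarrow> real set" where
  "shift1 S = (\<lambda>x. x + 1) ` S"

definition dyck_of_set :: "real set \<Rightarrow> bool list" where
  "dyck_of_set S = map (\<lambda>y. y \<in> S) (sorted_list_of_set (S \<union> shift1 S))"

definition phi :: "nat \<Rightarrow> (nat \<times> nat) set set \<Rightarrow> bool list" where
  "phi n C = dyck_of_set (SOME S. finite S \<and> card S = n \<and> S \<inter> shift1 S = {}
                                   \<and> uip_rel S \<in> C)"

definition Xi_poset :: "ptree \<Rightarrow> (nat \<times> nat) set set" where
  "Xi_poset T = iso_class (num_nodes T) (uip_rel (tree_set T))"

definition level :: "ptree \<Rightarrow> nat \<Rightarrow> ptree list" where
  "level T d = ((\<lambda>ts. concat (map (\<lambda>t. rev (children t)) ts)) ^^ d) [T]"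

text \<open>All nodes by increasing depth, right to left within a depth (depth \<le> n suffices).\<close>
definition bfs_list :: "ptree \<Rightarrow> ptree list" where
  "bfs_list T = concat (map (level T) [0..<Suc (num_nodes T)])"

definition Xi_bounce :: "ptree \<Rightarrow> bool list" where
  "Xi_bounce T = concat (map (\<lambda>w. replicate (length (children w)) True @ [False])
                             (take (num_nodes T) (bfs_list T)))"

end

theory Submission
  imports Defs "HOL-Library.Multiset"
begin


fun mw :: "real list \<Rightarrow> real list \<Rightarrow> bool list" where
  "mw [] ys = map (\<lambda>_. False) ys"
| "mw (x#xs) [] = map (\<lambda>_. True) (x#xs)"
| "mw (x#xs) (y#ys) = (if x < y then True # mw xs (y#ys) else False # mw (x#xs) ys)"

lemma mw_Nil2[simp]: "mw xs [] = map (\<lambda>_. True) xs"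
  by (cases xs) auto

lemma mw_right:
  assumes "\<forall>y\<in>set C. \<forall>x\<in>set B. y < x"
  shows "mw B (C @ D) = map (\<lambda>_. False) C @ mw B D"
  using assms
proof (induction C)
  case Nil then show ?case by simp
next
  case (Cons y C)
  show ?case
  proof (cases B)
    case Nil then show ?thesis by simp
  next
    fix x B' assume B: "B = x # B'"
    then have "\<not> x < y" using Cons.prems by force
    moreover have "mw B (C @ D) = map (\<lambda>_. False) C @ mw B D" using Cons.IH Cons.prems by simp
    ultimately show ?thesis using B by simp
  qed
qed

lemma mw_left:
  assumes "\<forall>x\<in>set A. \<forall>y\<in>set D. x < y"
  shows "mw (A @ B) D = map (\<lambda>_. True) A @ mw B D"
  using assms
proof (induction A)
  case Nil then show ?case by simp
next
  case (Cons x A)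
  show ?case
  proof (cases D)
    case Nil then show ?thesis by simp
  next
    fix y D' assume D: "D = y # D'"
    then have "x < y" using Cons.prems by force
    moreover have "mw (A @ B) D = map (\<lambda>_. True) A @ mw B D" using Cons.IH Cons.prems by simp
    ultimately show ?thesis using D by simp
  qed
qed

lemma mw_append:
  assumes "\<forall>a\<in>set A \<union> set C. \<forall>b\<in>set B \<union> set D. a < b"
  shows "mw (A @ B) (C @ D) = mw A C @ mw B D"
  using assms
proof (induction A C rule: mw.induct)
  case (1 ys)
  then show ?case using mw_right[of ys B D] by simp
next
  case (2 x xs)
  then show ?case using mw_left[of "x#xs" D B] by simp
next
  case (3 x xs y ys)
  then show ?case by auto
qed

fun wd :: "nat \<Rightarrow> nat list \<Rightarrow> nat \<Rightarrow> bool list" where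
  "wd k [] n = replicate (n - k) False"
| "wd k (c#cs) n = replicate (c - k) False @ True # wd c cs n"

fun ext :: "nat \<Rightarrow> bool list \<Rightarrow> nat list" where
  "ext k [] = []"
| "ext k (False # w) = ext (Suc k) w"
| "ext k (True # w) = k # ext k w"

lemma ext_ge: "x \<in> set (ext k w) \<Longrightarrow> k \<le> x"
  by (induction k w rule: ext.induct) fastforce+

lemma ext_sorted: "sorted (ext k w)"
proof (induction k w rule: ext.induct)
  case (3 k w) then show ?case using ext_ge by auto
qed auto

lemma ext_length: "length (ext k w) = count_list w True"
  by (induction k w rule: ext.induct) auto

lemma wd_shift:
  assumes "\<forall>c\<in>set ds. Suc k \<le> c" "Suc k \<le> n"
  shows "wd k ds n = False # wd (Suc k) ds n"
proof (cases ds)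
  case Nil
  have "n - k = Suc (n - Suc k)" using assms by simp
  then show ?thesis using Nil by simp
next
  case (Cons c cs)
  then have "c - k = Suc (c - Suc k)" using assms by auto
  then show ?thesis using Cons by simp
qed

lemma wd_ext: "wd k (ext k w) (k + count_list w False) = w"
proof (induction k w rule: ext.induct)
  case (1 k) then show ?case by simp
next
  case (2 k w)
  have "wd k (ext (Suc k) w) (k + count_list (False # w) False)
      = False # wd (Suc k) (ext (Suc k) w) (Suc k + count_list w False)"
    by (subst wd_shift) (auto dest: ext_ge)
  then show ?case using 2 by simp
next
  case (3 k w) then show ?case by simp
qed

lemma ext_bound:
  assumes "\<forall>m. k + count_list (take m w) False \<le> t + count_list (take m w) True"
  shows "\<forall>j < length (ext k w). ext k w ! j \<le> t + j"
  using assms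
proof (induction k w arbitrary: t rule: ext.induct)
  case (1 k) then show ?case by simp
next
  case (2 k w)
  have "\<forall>m. Suc k + count_list (take m w) False \<le> t + count_list (take m w) True"
  proof
    fix m show "Suc k + count_list (take m w) False \<le> t + count_list (take m w) True"
      using 2(2)[rule_format, of "Suc m"] by simp
  qed
  then show ?case using 2(1) by simp
next
  case (3 k w)
  have k: "k \<le> t" using 3(2)[rule_format, of 0] by simp
  have "\<forall>m. k + count_list (take m w) False \<le> Suc t + count_list (take m w) True"
  proof
    fix m show "k + count_list (take m w) False \<le> Suc t + count_list (take m w) True"
      using 3(2)[rule_format, of "Suc m"] by simp
  qed
  then have IH: "\<forall>j<length (ext k w). ext k w ! j \<le> Suc t + j" using 3(1) by blast
  show ?case
  proof (intro allI impI)
    fix j assume "j < length (ext k (True # w))"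
    then show "ext k (True # w) ! j \<le> t + j"
      using k IH by (cases j) auto
  qed
qed

lemma wd_length:
  assumes "sorted (k#ds)" "\<forall>c\<in>set ds. c \<le> n" "k \<le> n"
  shows "length (wd k ds n) = n - k + length ds"
  using assms by (induction k ds n rule: wd.induct) auto

lemma wd_countT: "count_list (wd k ds n) True = length ds"
  by (induction k ds n rule: wd.induct) auto

lemma count_list_replicate_gen: "count_list (replicate m a) b = (if a = b then m else 0)"
  by (induction m) auto

lemma wd_prefix:
  assumes "sorted (k#ds)" "\<forall>j<length ds. ds ! j \<le> t + j" "n \<le> t + length ds" "k \<le> t"
  shows "k + count_list (take m (wd k ds n)) False \<le> t + count_list (take m (wd k ds n)) True"
  using assms
proof (induction k ds n arbitrary: t m rule: wd.induct)
  case (1 k n)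
  then show ?case
    by (simp add: count_list_replicate_gen min_def) arith
next
  case (2 k c cs n)
  have ct: "c \<le> t" using 2(3)[rule_format, of 0] by simp
  have kc: "k \<le> c" using 2(2) by simp
  show ?case
  proof (cases "m \<le> c - k")
    case True
    then show ?thesis using ct kc by (simp add: count_list_replicate_gen min_def)
  next
    case False
    then obtain q where q: "m = (c - k) + Suc q" by (metis add_Suc_right less_imp_Suc_add not_le)
    have IH: "c + count_list (take q (wd c cs n)) False \<le> Suc t + count_list (take q (wd c cs n)) True"
      apply (rule 2(1))
      using 2(2-5) by (auto simp: nth_Cons_Suc)
    have "take m (wd k (c#cs) n) = replicate (c - k) False @ True # take q (wd c cs n)"
      using q by simp
    then show ?thesis using IH kc by (simp add: count_list_append count_list_replicate_gen)
  qed
qed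

lemma replicate_False_True_eq:
  "replicate a False @ True # r = replicate b False @ True # r' \<Longrightarrow> a = b \<and> r = r'"
proof (induction a arbitrary: b)
  case 0 then show ?case by (cases b) auto
next
  case (Suc a) then show ?case by (cases b) auto
qed

lemma wd_inj:
  assumes "sorted (k#ds)" "sorted (k#ds')" "wd k ds n = wd k ds' n"
  shows "ds = ds'"
  using assms
proof (induction ds arbitrary: k ds')
  case Nil
  show ?case
  proof (cases ds')
    case (Cons c cs)
    have "True \<in> set (wd k ds' n)" using Cons by simp
    then have "True \<in> set (wd k [] n)" unfolding Nil.prems(3) .
    then show ?thesis by simp
  qed simp
next
  case (Cons c cs)
  show ?case
  proof (cases ds')
    case Nil
    have "True \<in> set (wd k (c#cs) n)" by simp
    then have "True \<in> set (wd k ds' n)" unfolding Cons.prems(3) .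
    then show ?thesis using Nil by simp
  next
    case (Cons c' cs')
    have "replicate (c-k) False @ True # wd c cs n = replicate (c'-k) False @ True # wd c' cs' n"
      using Cons.prems(3) unfolding Cons wd.simps .
    then have e: "c - k = c' - k" "wd c cs n = wd c' cs' n"
      using replicate_False_True_eq by blast+
    have "k \<le> c" "k \<le> c'" using Cons.prems(1,2) Cons by auto
    then have "c = c'" using e(1) by simp
    moreover have "sorted (c#cs)" "sorted (c#cs')" using Cons.prems(1,2) Cons \<open>c = c'\<close> by auto
    ultimately show ?thesis using Cons.IH[of c cs'] e(2) Cons by simp
  qed
qed


lemma sl_of_sorted: "sorted_wrt (<) (l::'a::linorder list) \<Longrightarrow> sorted_list_of_set (set l) = l"
  by (metis sorted_list_of_set.strict_sorted_key_list_of_set strict_sorted_equal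
        finite_set sorted_list_of_set.set_sorted_key_list_of_set)

lemma sl_insert_min:
  assumes "finite A" "\<forall>z\<in>A. x < z"
  shows "sorted_list_of_set (insert (x::'a::linorder) A) = x # sorted_list_of_set A"
proof -
  have "Min (insert x A) = x" using assms by (auto intro!: Min_eqI)
  moreover have "insert x A - {x} = A" using assms by auto
  ultimately show ?thesis using sorted_list_of_set_nonempty[of "insert x A"] assms by simp
qed

lemma mw_sl:
  assumes "sorted_wrt (<) xs" "sorted_wrt (<) ys" "set xs \<inter> set ys = {}"
  shows "map (\<lambda>z. z \<in> set xs) (sorted_list_of_set (set xs \<union> set ys)) = mw xs ys"
  using assms
proof (induction xs ys rule: mw.induct)
  case (1 ys)
  then show ?case by (simp add: sl_of_sorted)
next
  case (2 x xs)
  then have "sorted_list_of_set (set (x#xs) \<union> set []) = x#xs"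
    using sl_of_sorted[of "x#xs"] by simp
  then show ?case by simp
next
  case (3 x xs y ys)
  show ?case
  proof (cases "x < y")
    case True
    have A: "set (x#xs) \<union> set (y#ys) = insert x (set xs \<union> set (y#ys))" by auto
    have mn: "\<forall>z\<in>set xs \<union> set (y#ys). x < z" using 3(3,4) True by auto
    have "map (\<lambda>z. z \<in> set (x#xs)) (sorted_list_of_set (set xs \<union> set (y#ys)))
        = map (\<lambda>z. z \<in> set xs) (sorted_list_of_set (set xs \<union> set (y#ys)))"
    proof (rule map_cong[OF refl])
      fix z assume "z \<in> set (sorted_list_of_set (set xs \<union> set (y#ys)))"
      then have "z \<in> set xs \<union> set (y#ys)" by (metis finite_set finite_Un sorted_list_of_set.set_sorted_key_list_of_set)
      then have "z \<noteq> x" using mn by auto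
      then show "(z \<in> set (x#xs)) = (z \<in> set xs)" by simp
    qed
    also have "\<dots> = mw xs (y#ys)" using 3(1)[OF True] 3(3-5) by auto
    finally show ?thesis using True A sl_insert_min[OF _ mn] by simp
  next
    case False
    then have yx: "y < x" using 3(5) by (cases "x = y") auto
    have A: "set (x#xs) \<union> set (y#ys) = insert y (set (x#xs) \<union> set ys)" by auto
    have mn: "\<forall>z\<in>set (x#xs) \<union> set ys. y < z" using 3(3,4) yx by auto
    have ny: "y \<notin> set (x#xs)" using 3(5) by auto
    have "map (\<lambda>z. z \<in> set (x#xs)) (sorted_list_of_set (set (x#xs) \<union> set ys)) = mw (x#xs) ys"
      using 3(2)[OF False] 3(3-5) by auto
    then show ?thesis using False A sl_insert_min[OF _ mn] ny by simp
  qed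
qed

lemma wd_allk: "wd k (map (\<lambda>_. k) xs) k = map (\<lambda>_. True) xs"
  by (induction xs) auto

lemma mw_wd:
  assumes "sorted_wrt (<) xs" "sorted_wrt (<) ys" "set xs \<inter> set ys = {}"
  shows "mw xs ys = wd k (map (\<lambda>x. k + length (filter (\<lambda>y. y < x) ys)) xs) (k + length ys)"
  using assms
proof (induction xs ys arbitrary: k rule: mw.induct)
  case (1 ys)
  then show ?case by (simp add: map_replicate_const)
next
  case (2 x xs)
  then show ?case using wd_allk[of k "x#xs"] by simp
next
  case (3 x xs y ys)
  show ?case
  proof (cases "x < y")
    case True
    have c0: "filter (\<lambda>y'. y' < x) (y#ys) = []" using 3(4) True by (auto simp: filter_empty_conv)
    show ?thesis using 3(1)[OF True, of k] 3(3-5) True c0 by simp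
  next
    case False
    then have yx: "y < x" using 3(5) by (cases "x = y") auto
    have ylt: "\<forall>z\<in>set (x#xs). y < z"
      using 3(3) yx by auto
    have e1: "map (\<lambda>z. k + length (filter (\<lambda>y'. y' < z) (y#ys))) (x#xs)
        = map (\<lambda>z. Suc k + length (filter (\<lambda>y'. y' < z) ys)) (x#xs)"
      by (rule map_cong[OF refl]) (use ylt in auto)
    have e2: "wd k (map (\<lambda>z. Suc k + length (filter (\<lambda>y'. y' < z) ys)) (x#xs)) (k + length (y#ys))
       = False # wd (Suc k) (map (\<lambda>z. Suc k + length (filter (\<lambda>y'. y' < z) ys)) (x#xs)) (Suc k + length ys)"
      by (subst wd_shift) auto
    have e3: "mw (x#xs) ys = wd (Suc k) (map (\<lambda>z. Suc k + length (filter (\<lambda>y'. y' < z) ys)) (x#xs)) (Suc k + length ys)"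
      using 3(2)[OF False, of "Suc k"] 3(3-5) by auto
    have "mw (x#xs) (y#ys) = False # mw (x#xs) ys" using False by simp
    also have "\<dots> = wd k (map (\<lambda>z. k + length (filter (\<lambda>y'. y' < z) (y#ys))) (x#xs)) (k + length (y#ys))"
      unfolding e1 e2 e3 ..
    finally show ?thesis .
  qed
qed

definition DL :: "real set \<Rightarrow> nat list" where
  "DL S = map (\<lambda>x. card {y\<in>S. y + 1 < x}) (sorted_list_of_set S)"

lemma dyck_wd:
  assumes "finite S" "S \<inter> shift1 S = {}"
  shows "dyck_of_set S = wd 0 (DL S) (card S)"
proof -
  define xs where "xs = sorted_list_of_set S"
  define ys where "ys = map (\<lambda>x. x + 1) xs"
  have sx: "sorted_wrt (<) xs" "set xs = S" "length xs = card S" "distinct xs"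
    using assms xs_def by auto
  have sy: "sorted_wrt (<) ys" using sx(1) unfolding ys_def by (simp add: sorted_wrt_map)
  have sety: "set ys = shift1 S" using sx unfolding ys_def shift1_def by auto
  have dj: "set xs \<inter> set ys = {}" using sx(2) sety assms(2) by simp
  have "dyck_of_set S = map (\<lambda>z. z \<in> set xs) (sorted_list_of_set (set xs \<union> set ys))"
    unfolding dyck_of_set_def sx(2) sety ..
  also have "\<dots> = mw xs ys" by (rule mw_sl[OF sx(1) sy dj])
  also have "\<dots> = wd 0 (map (\<lambda>x. length (filter (\<lambda>y. y < x) ys)) xs) (length ys)"
    using mw_wd[OF sx(1) sy dj, of 0] by simp
  also have "map (\<lambda>x. length (filter (\<lambda>y. y < x) ys)) xs = DL S"
    unfolding DL_def xs_def[symmetric]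
  proof (rule map_cong[OF refl])
    fix x assume "x \<in> set xs"
    have "length (filter (\<lambda>y. y < x) ys) = length (filter (\<lambda>y. y + 1 < x) xs)"
      unfolding ys_def by (simp add: filter_map comp_def)
    also have "\<dots> = card {y\<in>S. y + 1 < x}"
    proof -
      have "{y. y + 1 < x} \<inter> set xs = {y\<in>S. y + 1 < x}" using sx by auto
      then show ?thesis using sx(4) by (simp add: distinct_length_filter)
    qed
    finally show "length (filter (\<lambda>y. y < x) ys) = card {y\<in>S. y + 1 < x}" .
  qed
  finally show ?thesis using sx(3) unfolding ys_def by simp
qed


lemma sl_facts:
  assumes "finite (S::real set)"
  shows "sorted (sorted_list_of_set S)" "distinct (sorted_list_of_set S)"
    "set (sorted_list_of_set S) = S" "length (sorted_list_of_set S) = card S"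
  using assms by auto

lemma K0:
  assumes "finite (S::real set)" "i < card S" "j < card S"
  shows "sorted_list_of_set S ! i + 1 < sorted_list_of_set S ! j
     \<longleftrightarrow> i < card {y\<in>S. y + 1 < sorted_list_of_set S ! j}"
proof -
  define xs where "xs = sorted_list_of_set S"
  note f = sl_facts[OF assms(1), folded xs_def]
  define A where "A = {y\<in>S. y + 1 < xs ! j}"
  have fA: "finite A" using assms(1) A_def by auto
  show ?thesis unfolding xs_def[symmetric] A_def[symmetric]
  proof
    assume h: "xs ! i + 1 < xs ! j"
    have "(\<lambda>k. xs ! k) ` {0..i} \<subseteq> A"
    proof
      fix y assume "y \<in> (\<lambda>k. xs ! k) ` {0..i}"
      then obtain k where k: "k \<le> i" "y = xs ! k" by auto
      have il: "i < length xs" using assms(2) f(4) by simp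
      have "xs ! k \<le> xs ! i" using sorted_nth_mono[OF f(1) k(1) il] .
      moreover have "k < length xs" using k(1) il by simp
      then have "xs ! k \<in> S" using f(3) nth_mem by blast
      ultimately show "y \<in> A" using h k A_def by auto
    qed
    then have c1: "card ((\<lambda>k. xs ! k) ` {0..i}) \<le> card A" by (rule card_mono[OF fA])
    have "inj_on (\<lambda>k. xs ! k) {0..i}"
      by (rule inj_on_nth) (use f(2,4) assms(2) in auto)
    then have "card ((\<lambda>k. xs ! k) ` {0..i}) = Suc i" by (simp add: card_image)
    then show "i < card A" using c1 by simp
  next
    assume h: "i < card A"
    show "xs ! i + 1 < xs ! j"
    proof (rule ccontr)
      assume nh: "\<not> xs ! i + 1 < xs ! j"
      have "A \<subseteq> (\<lambda>k. xs ! k) ` {0..<i}"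
      proof
        fix y assume yA: "y \<in> A"
        then have "y \<in> set xs" using f(3) A_def by auto
        then obtain k where k: "k < length xs" "y = xs ! k" by (auto simp: in_set_conv_nth)
        have "k < i"
        proof (rule ccontr)
          assume "\<not> k < i"
          then have "xs ! i \<le> xs ! k" using sorted_nth_mono[OF f(1) _ k(1)] by simp
          then show False using nh yA k A_def by auto
        qed
        then show "y \<in> (\<lambda>k. xs ! k) ` {0..<i}" using k by auto
      qed
      then have "card A \<le> card ((\<lambda>k. xs ! k) ` {0..<i})" by (simp add: card_mono)
      also have "\<dots> \<le> i" using card_image_le[of "{0..<i}" "\<lambda>k. xs ! k"] by simp
      finally show False using h by simp
    qed
  qed
qed

definition dsize :: "nat \<Rightarrow> (nat \<times> nat) set \<Rightarrow> nat \<Rightarrow> nat" where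
  "dsize n R j = card {i\<in>{1..n}. i \<noteq> j \<and> (i, j) \<in> R}"

lemma uip_rel_iff:
  "(i, j) \<in> uip_rel S \<longleftrightarrow> i \<in> {1..card S} \<and> j \<in> {1..card S} \<and>
     (i = j \<or> sorted_list_of_set S ! (i - 1) + 1 < sorted_list_of_set S ! (j - 1))"
  by (simp add: uip_rel_def Let_def)

lemma uip_rel_sub: "uip_rel S \<subseteq> {1..card S} \<times> {1..card S}"
  by (auto simp: uip_rel_def Let_def)

lemma uip_rel_DL:
  assumes "finite S" "i \<in> {1..card S}" "j \<in> {1..card S}"
  shows "(i, j) \<in> uip_rel S \<longleftrightarrow> i = j \<or> i \<le> DL S ! (j - 1)"
proof -
  have "j - 1 < length (sorted_list_of_set S)" using assms by auto
  then have "DL S ! (j - 1) = card {y\<in>S. y + 1 < sorted_list_of_set S ! (j - 1)}"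
    by (simp add: DL_def)
  moreover have "i - 1 < card S" "j - 1 < card S" using assms by auto
  ultimately have "sorted_list_of_set S ! (i - 1) + 1 < sorted_list_of_set S ! (j - 1) \<longleftrightarrow> i \<le> DL S ! (j - 1)"
    using K0[OF assms(1), of "i - 1" "j - 1"] assms(2) by auto
  then show ?thesis using assms uip_rel_iff[of i j S] by auto
qed

lemma length_DL: "finite S \<Longrightarrow> length (DL S) = card S"
  by (simp add: DL_def)

lemma DL_rel_eq:
  assumes "finite S" "finite S'" "card S = card S'" "DL S = DL S'"
  shows "uip_rel S = uip_rel S'"
proof -
  have "\<And>i j. (i, j) \<in> uip_rel S \<longleftrightarrow> (i, j) \<in> uip_rel S'"
  proof -
    fix i j
    show "(i, j) \<in> uip_rel S \<longleftrightarrow> (i, j) \<in> uip_rel S'"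
    proof (cases "i \<in> {1..card S} \<and> j \<in> {1..card S}")
      case True
      then show ?thesis using uip_rel_DL[OF assms(1)] uip_rel_DL[OF assms(2)] assms(3,4) by auto
    next
      case False
      then show ?thesis using uip_rel_sub[of S] uip_rel_sub[of S'] assms(3) by auto
    qed
  qed
  then show ?thesis by auto
qed

lemma DL_sorted:
  assumes "finite S"
  shows "sorted (DL S)"
proof -
  note f = sl_facts[OF assms]
  have "mono (\<lambda>x. card {y\<in>S. y + 1 < x})"
    by (rule monoI, rule card_mono) (use assms in auto)
  then show ?thesis unfolding DL_def using f(1) unfolding sorted_map
    by (elim sorted_wrt_mono_rel[rotated]) (auto intro!: card_mono simp: assms)
qed

lemma DL_bound:
  assumes "finite S" "j < card S"
  shows "DL S ! j \<le> j"
proof -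
  define xs where "xs = sorted_list_of_set S"
  note f = sl_facts[OF assms(1), folded xs_def]
  have "{y\<in>S. y + 1 < xs ! j} \<subseteq> (\<lambda>k. xs ! k) ` {0..<j}"
  proof
    fix y assume yA: "y \<in> {y\<in>S. y + 1 < xs ! j}"
    then obtain k where k: "k < length xs" "y = xs ! k" using f(3) by (auto simp: in_set_conv_nth)
    have "k < j"
    proof (rule ccontr)
      assume "\<not> k < j"
      then have "xs ! j \<le> xs ! k" using f(1) k(1) by (simp add: sorted_nth_mono)
      then show False using yA k by auto
    qed
    then show "y \<in> (\<lambda>k. xs ! k) ` {0..<j}" using k by auto
  qed
  then have "card {y\<in>S. y + 1 < xs ! j} \<le> card ((\<lambda>k. xs ! k) ` {0..<j})" by (simp add: card_mono)
  also have "\<dots> \<le> j" using card_image_le[of "{0..<j}" "\<lambda>k. xs ! k"] by simp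
  moreover have "j < length xs" using assms f(4) by simp
  ultimately show ?thesis by (simp add: DL_def xs_def)
qed

lemma DL_le: "finite S \<Longrightarrow> c \<in> set (DL S) \<Longrightarrow> c \<le> card S"
  unfolding DL_def by (auto intro!: card_mono)

lemma DL_dsize:
  assumes "finite S"
  shows "DL S = map (dsize (card S) (uip_rel S)) [1..<Suc (card S)]"
proof (rule nth_equalityI)
  show "length (DL S) = length (map (dsize (card S) (uip_rel S)) [1..<Suc (card S)])"
    using assms by (simp add: length_DL del: upt_Suc)
next
  fix j assume "j < length (DL S)"
  then have j: "j < card S" using assms by (simp add: length_DL)
  define xs where "xs = sorted_list_of_set S"
  note f = sl_facts[OF assms(1), folded xs_def]
  have "{i\<in>{1..card S}. i \<noteq> Suc j \<and> (i, Suc j) \<in> uip_rel S}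
      = {i\<in>{1..card S}. i \<le> DL S ! j}"
    using uip_rel_DL[OF assms, of _ "Suc j"] j DL_bound[OF assms j] by auto
  also have "\<dots> = {1..DL S ! j}"
    using DL_bound[OF assms j] j by auto
  finally have "dsize (card S) (uip_rel S) (Suc j) = DL S ! j" unfolding dsize_def by simp
  then show "DL S ! j = map (dsize (card S) (uip_rel S)) [1..<Suc (card S)] ! j"
    using j by (simp del: upt_Suc)
qed

lemma poset_iso_dsize:
  assumes "poset_iso n P Q" "\<And>j. j \<in> {1..n} \<Longrightarrow> True"
  shows "\<exists>f. bij_betw f {1..n} {1..n} \<and> (\<forall>j\<in>{1..n}. dsize n P j = dsize n Q (f j))"
proof -
  obtain f where f: "bij_betw f {1..n} {1..n}"
    "\<forall>i\<in>{1..n}. \<forall>j\<in>{1..n}. (i, j) \<in> P \<longleftrightarrow> (f i, f j) \<in> Q"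
    using assms(1) unfolding poset_iso_def by blast
  have "\<forall>j\<in>{1..n}. dsize n P j = dsize n Q (f j)"
  proof
    fix j assume j: "j \<in> {1..n}"
    have inj: "inj_on f {1..n}" using f(1) bij_betw_def by blast
    have "f ` {i\<in>{1..n}. i \<noteq> j \<and> (i, j) \<in> P} = {i\<in>{1..n}. i \<noteq> f j \<and> (i, f j) \<in> Q}"
    proof
      show "f ` {i\<in>{1..n}. i \<noteq> j \<and> (i, j) \<in> P} \<subseteq> {i\<in>{1..n}. i \<noteq> f j \<and> (i, f j) \<in> Q}"
      proof
        fix i' assume "i' \<in> f ` {i\<in>{1..n}. i \<noteq> j \<and> (i, j) \<in> P}"
        then obtain i where i: "i \<in> {1..n}" "i \<noteq> j" "(i, j) \<in> P" "i' = f i" by blast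
        have "f i \<in> {1..n}" using bij_betw_apply[OF f(1) i(1)] .
        moreover have "f i \<noteq> f j" using inj i(1,2) j by (meson inj_on_contraD)
        moreover have "(f i, f j) \<in> Q" using f(2) i(1,3) j by blast
        ultimately show "i' \<in> {i\<in>{1..n}. i \<noteq> f j \<and> (i, f j) \<in> Q}" using i(4) by simp
      qed
    next
      show "{i\<in>{1..n}. i \<noteq> f j \<and> (i, f j) \<in> Q} \<subseteq> f ` {i\<in>{1..n}. i \<noteq> j \<and> (i, j) \<in> P}"
      proof
        fix i' assume i': "i' \<in> {i\<in>{1..n}. i \<noteq> f j \<and> (i, f j) \<in> Q}"
        then have "i' \<in> f ` {1..n}" using bij_betw_imp_surj_on[OF f(1)] by simp
        then obtain i where i: "i \<in> {1..n}" "i' = f i" by blast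
        then show "i' \<in> f ` {i\<in>{1..n}. i \<noteq> j \<and> (i, j) \<in> P}" using i' f(2) j by auto
      qed
    qed
    moreover have "inj_on f {i\<in>{1..n}. i \<noteq> j \<and> (i, j) \<in> P}" using inj by (rule inj_on_subset) auto
    ultimately show "dsize n P j = dsize n Q (f j)" unfolding dsize_def
      using card_image by fastforce
  qed
  then show ?thesis using f(1) by blast
qed

lemma mset_dsize:
  assumes "poset_iso n P Q"
  shows "mset (map (dsize n P) [1..<Suc n]) = mset (map (dsize n Q) [1..<Suc n])"
proof -
  obtain f where f: "bij_betw f {1..n} {1..n}" "\<forall>j\<in>{1..n}. dsize n P j = dsize n Q (f j)"
    using poset_iso_dsize[OF assms] by blast
  have m1: "map (dsize n P) [1..<Suc n] = map (dsize n Q) (map f [1..<Suc n])"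
    using f(2) by auto
  have m2: "mset (map f [1..<Suc n]) = mset [1..<Suc n]"
  proof -
    have ms: "mset [1..<Suc n] = mset_set {1..n}"
      using mset_set_set[of "[1..<Suc n]"] by (simp del: upt_Suc add: atLeastLessThanSuc_atLeastAtMost)
    have "mset (map f [1..<Suc n]) = image_mset f (mset [1..<Suc n])" by (simp del: upt_Suc)
    also have "\<dots> = image_mset f (mset_set {1..n})" using ms by (simp del: upt_Suc)
    also have "\<dots> = mset_set (f ` {1..n})"
      using f(1) by (simp add: bij_betw_def image_mset_mset_set)
    also have "f ` {1..n} = {1..n}" using f(1) by (simp add: bij_betw_def)
    finally show ?thesis using ms by simp
  qed
  have "mset (map (dsize n P) [1..<Suc n]) = image_mset (dsize n Q) (mset (map f [1..<Suc n]))"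
    unfolding m1 mset_map ..
  also have "\<dots> = mset (map (dsize n Q) [1..<Suc n])" unfolding m2 by (simp only: mset_map)
  finally show ?thesis .
qed

lemma iso_DL_eq:
  assumes "finite S" "finite S'" "card S = n" "card S' = n" "poset_iso n (uip_rel S) (uip_rel S')"
  shows "DL S = DL S'"
proof -
  have a: "DL S = map (dsize n (uip_rel S)) [1..<Suc n]" using DL_dsize[OF assms(1)] unfolding assms(3) .
  have b: "DL S' = map (dsize n (uip_rel S')) [1..<Suc n]" using DL_dsize[OF assms(2)] unfolding assms(4) .
  have "mset (DL S) = mset (DL S')" unfolding a b by (rule mset_dsize[OF assms(5)])
  from properties_for_sort[OF this[symmetric] DL_sorted[OF assms(2)]]
  have "sort (DL S) = DL S'" .
  then show ?thesis using sorted_sort_id[OF DL_sorted[OF assms(1)]] by simp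
qed


lemma scale_key:
  fixes S :: "real set"
  assumes "finite S"
  obtains l where "0 < l" "\<And>x y. x \<in> S \<Longrightarrow> y \<in> S \<Longrightarrow> (l * x + 1 < l * y \<longleftrightarrow> x + 1 < y)"
    "\<And>x y. x \<in> S \<Longrightarrow> y \<in> S \<Longrightarrow> l * x + 1 \<noteq> l * y"
proof -
  define D where "D = (\<lambda>(x, y). y - x) ` {(x, y). x \<in> S \<and> y \<in> S \<and> y - x > 1}"
  have fD: "finite D" unfolding D_def
    by (rule finite_imageI, rule finite_subset[of _ "S \<times> S"]) (use assms in auto)
  define l :: real where "l = (if D = {} then 1/2 else (1 + 1 / Min D) / 2)"
  have Dgt: "\<And>d. d \<in> D \<Longrightarrow> d > 1" unfolding D_def by auto
  have l0: "0 < l" "l < 1"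
  proof -
    show "0 < l"
    proof (cases "D = {}")
      case False
      have "Min D > 1" using Dgt Min_in[OF fD False] by auto
      then have "0 < 1 + 1 / Min D" by (simp add: add_pos_pos)
      then show ?thesis using False unfolding l_def by simp
    qed (simp add: l_def)
    show "l < 1"
    proof (cases "D = {}")
      case False
      have "Min D > 1" using Dgt Min_in[OF fD False] by auto
      then have "1 / Min D < 1" by simp
      then show ?thesis using False unfolding l_def by simp
    qed (simp add: l_def)
  qed
  have lD: "\<And>d. d \<in> D \<Longrightarrow> l * d > 1"
  proof -
    fix d assume d: "d \<in> D"
    then have ne: "D \<noteq> {}" by auto
    have m1: "Min D > 1" using Dgt Min_in[OF fD ne] by auto
    have md: "Min D \<le> d" using Min_le[OF fD d] .
    have leq: "l = (1 + 1 / Min D) / 2" using ne l_def by simp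
    have "l * Min D = (Min D + 1) / 2" using leq m1 by (simp add: field_simps)
    also have "\<dots> > 1" using m1 by simp
    finally have "l * Min D > 1" .
    moreover have "l * Min D \<le> l * d" using md l0 by simp
    ultimately show "l * d > 1" by simp
  qed
  have key: "\<And>x y. x \<in> S \<Longrightarrow> y \<in> S \<Longrightarrow> l * x + 1 \<le> l * y \<Longrightarrow> l * x + 1 < l * y \<and> x + 1 < y"
  proof -
    fix x y assume xy: "x \<in> S" "y \<in> S" "l * x + 1 \<le> l * y"
    then have "l * (y - x) \<ge> 1" by (simp add: algebra_simps)
    then have "y - x \<ge> 1 / l" using l0 by (simp add: field_simps)
    moreover have "1 / l > 1" using l0 by simp
    ultimately have "y - x > 1" by simp
    then have "y - x \<in> D" unfolding D_def using xy by force
    then have "l * (y - x) > 1" by (rule lD)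
    then show "l * x + 1 < l * y \<and> x + 1 < y" using \<open>y - x > 1\<close> by (simp add: algebra_simps)
  qed
  show ?thesis
  proof (rule that[OF l0(1)])
    fix x y assume xy: "x \<in> S" "y \<in> S"
    show "l * x + 1 < l * y \<longleftrightarrow> x + 1 < y"
    proof
      assume "l * x + 1 < l * y" then show "x + 1 < y" using key[OF xy] by simp
    next
      assume "x + 1 < y"
      then have "y - x \<in> D" unfolding D_def using xy by force
      then have "l * (y - x) > 1" by (rule lD)
      then show "l * x + 1 < l * y" by (simp add: algebra_simps)
    qed
    show "l * x + 1 \<noteq> l * y" using key[OF xy] by force
  qed
qed

lemma perturb:
  fixes S :: "real set"
  assumes "finite S"
  shows "\<exists>S'. finite S' \<and> card S' = card S \<and> S' \<inter> shift1 S' = {} \<and> uip_rel S' = uip_rel S"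
proof -
  obtain l where l: "0 < l" "\<And>x y. x \<in> S \<Longrightarrow> y \<in> S \<Longrightarrow> (l * x + 1 < l * y \<longleftrightarrow> x + 1 < y)"
    "\<And>x y. x \<in> S \<Longrightarrow> y \<in> S \<Longrightarrow> l * x + 1 \<noteq> l * y"
    using scale_key[OF assms] by blast
  define S' where "S' = (\<lambda>x. l * x) ` S"
  have inj: "inj_on (\<lambda>x. l * x) S" using l(1) by (auto simp: inj_on_def)
  have fin: "finite S'" using assms S'_def by simp
  have card: "card S' = card S" using card_image[OF inj] S'_def by simp
  define xs where "xs = sorted_list_of_set S"
  note f = sl_facts[OF assms, folded xs_def]
  have sw: "sorted_wrt (<) xs" using assms xs_def by simp
  have "sorted_wrt (<) (map (\<lambda>x. l * x) xs)"
    unfolding sorted_wrt_map by (rule sorted_wrt_mono_rel[OF _ sw]) (use l(1) in simp)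
  then have sl: "sorted_list_of_set S' = map (\<lambda>x. l * x) xs"
    using sl_of_sorted[of "map (\<lambda>x. l * x) xs"] f(3) S'_def by simp
  have disj: "S' \<inter> shift1 S' = {}"
    using l(3) unfolding S'_def shift1_def by fastforce
  have rel: "uip_rel S' = uip_rel S"
  proof -
    have "\<And>i j. (i, j) \<in> uip_rel S' \<longleftrightarrow> (i, j) \<in> uip_rel S"
    proof -
      fix i j
      show "(i, j) \<in> uip_rel S' \<longleftrightarrow> (i, j) \<in> uip_rel S"
      proof (cases "i \<in> {1..card S} \<and> j \<in> {1..card S}")
        case True
        then have ij: "i - 1 < length xs" "j - 1 < length xs" using f(4) by auto
        have xin: "xs ! (i - 1) \<in> S" "xs ! (j - 1) \<in> S" using ij f(3) nth_mem by blast+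
        show ?thesis unfolding uip_rel_iff card sl xs_def[symmetric]
          using True ij l(2)[OF xin] by simp
      next
        case False
        then show ?thesis unfolding uip_rel_iff card by auto
      qed
    qed
    then show ?thesis by auto
  qed
  show ?thesis using fin card disj rel by blast
qed

definition Inv :: "nat list \<Rightarrow> real list \<Rightarrow> bool" where
  "Inv ds xs \<longleftrightarrow> sorted_wrt (<) xs \<and>
     (\<forall>i<length xs. \<forall>j<length xs. (xs ! i + 1 < xs ! j \<longleftrightarrow> i < ds ! j) \<and> xs ! i + 1 \<noteq> xs ! j)"

lemma build:
  assumes mono: "\<And>a b. a \<le> b \<Longrightarrow> b < n \<Longrightarrow> ds ! a \<le> ds ! b"
    and bnd: "\<And>j. j < n \<Longrightarrow> ds ! j \<le> j"
  shows "m \<le> n \<Longrightarrow> \<exists>xs. length xs = m \<and> Inv ds xs"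
proof (induction m)
  case 0 then show ?case by (auto simp: Inv_def)
next
  case (Suc m)
  then obtain xs where xs: "length xs = m" "Inv ds xs" by auto
  have mn: "m < n" using Suc.prems by simp
  have sw: "sorted_wrt (<) xs" and P: "\<And>i j. i < m \<Longrightarrow> j < m \<Longrightarrow>
      (xs ! i + 1 < xs ! j \<longleftrightarrow> i < ds ! j) \<and> xs ! i + 1 \<noteq> xs ! j"
    using xs unfolding Inv_def by auto
  have le_nth: "\<And>a b. a \<le> b \<Longrightarrow> b < m \<Longrightarrow> xs ! a \<le> xs ! b"
  proof -
    fix a b assume ab: "a \<le> b" "b < m"
    show "xs ! a \<le> xs ! b"
    proof (cases "a = b")
      case False
      then have "a < b" using ab by simp
      then show ?thesis using sorted_wrt_nth_less[OF sw, of a b] ab xs(1) by simp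
    qed simp
  qed
  define c where "c = ds ! m"
  have cm: "c \<le> m" using bnd[OF mn] c_def by simp
  show ?case
  proof (cases "m = 0")
    case True
    have "ds ! 0 = 0" using bnd[of 0] mn True by simp
    then have "Inv ds [0]" by (simp add: Inv_def)
    then show ?thesis using True by (intro exI[of _ "[0]"]) simp
  next
    case False
    define L where "L = (if c = 0 then xs ! (m - 1) else max (xs ! (m - 1)) (xs ! (c - 1) + 1))"
    define U where "U = (if c < m then xs ! c + 1 else xs ! (m - 1) + 2)"
    have LU: "L < U"
    proof -
      have a: "xs ! (m - 1) < U"
      proof (cases "c < m")
        case True
        have "ds ! (m - 1) \<le> c" using mono[of "m - 1" m] mn c_def by simp
        then have "\<not> xs ! c + 1 < xs ! (m - 1)" "xs ! c + 1 \<noteq> xs ! (m - 1)"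
          using P[of c "m - 1"] True False by auto
        then show ?thesis using True U_def by simp
      qed (simp add: U_def)
      have b: "c \<noteq> 0 \<Longrightarrow> xs ! (c - 1) + 1 < U"
      proof (cases "c < m")
        case True
        assume "c \<noteq> 0"
        then have "xs ! (c - 1) < xs ! c" using sw xs(1) True by (simp add: sorted_wrt_nth_less)
        then show ?thesis using True U_def by simp
      next
        case False
        assume "c \<noteq> 0"
        then have "c = m" using cm False by simp
        then show ?thesis using U_def by simp
      qed
      show ?thesis using a b unfolding L_def by auto
    qed
    define z where "z = (L + U) / 2"
    have zL: "L < z" and zU: "z < U" using LU z_def by auto
    have z1: "xs ! (m - 1) < z" using zL L_def by (auto split: if_splits)
    have zgt: "\<And>i. i < m \<Longrightarrow> xs ! i < z"
    proof -
      fix i assume i: "i < m"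
      then have "i \<le> m - 1" "m - 1 < m" using False by auto
      then have "xs ! i \<le> xs ! (m - 1)" by (rule le_nth)
      then show "xs ! i < z" using z1 by simp
    qed
    have lowc: "\<And>i. i < c \<Longrightarrow> xs ! i + 1 < z"
    proof -
      fix i assume i: "i < c"
      then have "xs ! i \<le> xs ! (c - 1)" using le_nth[of i "c - 1"] cm by simp
      moreover have "xs ! (c - 1) + 1 \<le> L" using i L_def by auto
      ultimately show "xs ! i + 1 < z" using zL by simp
    qed
    have highc: "\<And>i. c \<le> i \<Longrightarrow> i < m \<Longrightarrow> z < xs ! i + 1"
    proof -
      fix i assume i: "c \<le> i" "i < m"
      then have "xs ! c \<le> xs ! i" using le_nth by simp
      moreover have "U = xs ! c + 1" using i U_def by simp
      ultimately show "z < xs ! i + 1" using zU by simp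
    qed
    define ys where "ys = xs @ [z]"
    have ysl: "length ys = Suc m" using ys_def xs(1) by simp
    have nth_ys: "\<And>i. i < m \<Longrightarrow> ys ! i = xs ! i" "ys ! m = z"
      using ys_def xs(1) by (auto simp: nth_append)
    have "\<forall>x\<in>set xs. x < z"
    proof
      fix x assume "x \<in> set xs"
      then obtain i where "i < m" "x = xs ! i" using xs(1) by (auto simp: in_set_conv_nth)
      then show "x < z" using zgt by simp
    qed
    then have "sorted_wrt (<) ys" unfolding ys_def using sw
      by (simp add: sorted_wrt_append)
    moreover have "\<forall>i<Suc m. \<forall>j<Suc m. (ys ! i + 1 < ys ! j \<longleftrightarrow> i < ds ! j) \<and> ys ! i + 1 \<noteq> ys ! j"
    proof (intro allI impI)
      fix i j assume i: "i < Suc m" and j: "j < Suc m"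
      show "(ys ! i + 1 < ys ! j \<longleftrightarrow> i < ds ! j) \<and> ys ! i + 1 \<noteq> ys ! j"
      proof (cases "i < m")
        case iT: True
        show ?thesis
        proof (cases "j < m")
          case True then show ?thesis using P[OF iT True] nth_ys iT by simp
        next
          case False
          then have jm: "j = m" using j by simp
          show ?thesis
          proof (cases "i < c")
            case True then show ?thesis using lowc[OF True] jm nth_ys iT c_def by simp
          next
            case False then show ?thesis using highc[of i] iT jm nth_ys c_def by force
          qed
        qed
      next
        case False
        then have im: "i = m" using i by simp
        have dj: "ds ! j \<le> j" using bnd[of j] j mn by simp
        show ?thesis
        proof (cases "j < m")
          case True then show ?thesis using zgt[OF True] nth_ys im dj by auto
        next
          case False
          then have jm: "j = m" using j by simp
          show ?thesis using dj unfolding im jm by simp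
        qed
      qed
    qed
    ultimately have "Inv ds ys" unfolding Inv_def ysl by blast
    then show ?thesis using ysl by blast
  qed
qed

lemma count_TF: "count_list w True + count_list w False = length (w::bool list)"
  by (induction w) auto

lemma surj_dyck:
  assumes "w \<in> Dyck n"
  shows "\<exists>S. finite S \<and> card S = n \<and> S \<inter> shift1 S = {} \<and> dyck_of_set S = w"
proof -
  have w: "length w = 2 * n" "count_list w True = n"
    "\<forall>k\<le>length w. count_list (take k w) False \<le> count_list (take k w) True"
    using assms unfolding Dyck_def by auto
  have cF: "count_list w False = n" using count_TF[of w] w by simp
  define ds where "ds = ext 0 w"
  have wds: "wd 0 ds n = w" using wd_ext[of 0 w] cF ds_def by simp
  have lds: "length ds = n" using ext_length w(2) ds_def by simp
  have sds: "sorted ds" using ext_sorted ds_def by simp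
  have pre: "\<forall>m. 0 + count_list (take m w) False \<le> 0 + count_list (take m w) True"
  proof
    fix m show "0 + count_list (take m w) False \<le> 0 + count_list (take m w) True"
    proof (cases "m \<le> length w")
      case True then show ?thesis using w(3) by simp
    next
      case False then show ?thesis using w(3)[rule_format, of "length w"] by simp
    qed
  qed
  have bnd: "\<And>j. j < n \<Longrightarrow> ds ! j \<le> j" using ext_bound[OF pre] lds ds_def by simp
  have mono: "\<And>a b. a \<le> b \<Longrightarrow> b < n \<Longrightarrow> ds ! a \<le> ds ! b"
    using sds lds by (simp add: sorted_nth_mono)
  obtain xs where xs: "length xs = n" "Inv ds xs" using build[OF mono bnd, of n] by auto
  have sw: "sorted_wrt (<) xs" and P: "\<And>i j. i < n \<Longrightarrow> j < n \<Longrightarrow>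
      (xs ! i + 1 < xs ! j \<longleftrightarrow> i < ds ! j) \<and> xs ! i + 1 \<noteq> xs ! j"
    using xs unfolding Inv_def by auto
  define S where "S = set xs"
  have fin: "finite S" using S_def by simp
  have dist: "distinct xs" using sw by (simp add: strict_sorted_iff)
  have card: "card S = n" using distinct_card[OF dist] xs(1) S_def by simp
  have sl: "sorted_list_of_set S = xs" using sl_of_sorted[OF sw] S_def by simp
  have disj: "S \<inter> shift1 S = {}"
  proof -
    have "\<And>a b. a \<in> S \<Longrightarrow> b \<in> S \<Longrightarrow> a + 1 \<noteq> b"
    proof -
      fix a b assume "a \<in> S" "b \<in> S"
      then obtain i j where "i < n" "j < n" "a = xs ! i" "b = xs ! j"
        using S_def xs(1) by (auto simp: in_set_conv_nth)
      then show "a + 1 \<noteq> b" using P by blast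
    qed
    then show ?thesis unfolding shift1_def by auto
  qed
  have "DL S = ds"
  proof (rule nth_equalityI)
    show "length (DL S) = length ds" using length_DL[OF fin] card lds by simp
  next
    fix j assume "j < length (DL S)"
    then have j: "j < n" using length_DL[OF fin] card by simp
    have "{y\<in>S. y + 1 < xs ! j} = (\<lambda>i. xs ! i) ` {i. i < ds ! j}"
    proof
      show "{y\<in>S. y + 1 < xs ! j} \<subseteq> (\<lambda>i. xs ! i) ` {i. i < ds ! j}"
      proof
        fix y assume y: "y \<in> {y\<in>S. y + 1 < xs ! j}"
        then obtain i where "i < n" "y = xs ! i" using S_def xs(1) by (auto simp: in_set_conv_nth)
        then show "y \<in> (\<lambda>i. xs ! i) ` {i. i < ds ! j}" using P[OF _ j] y by auto
      qed
    next
      show "(\<lambda>i. xs ! i) ` {i. i < ds ! j} \<subseteq> {y\<in>S. y + 1 < xs ! j}"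
      proof
        fix y assume "y \<in> (\<lambda>i. xs ! i) ` {i. i < ds ! j}"
        then obtain i where i: "i < ds ! j" "y = xs ! i" by auto
        then have "i < n" using bnd[OF j] j by simp
        then show "y \<in> {y\<in>S. y + 1 < xs ! j}" using P[OF _ j] i S_def xs(1) by auto
      qed
    qed
    moreover have "inj_on (\<lambda>i. xs ! i) {i. i < ds ! j}"
      by (rule inj_on_nth[OF dist]) (use bnd[OF j] j xs(1) in auto)
    ultimately have "card {y\<in>S. y + 1 < xs ! j} = ds ! j" by (simp add: card_image)
    then show "DL S ! j = ds ! j" unfolding DL_def sl using j xs(1) by simp
  qed
  then have "dyck_of_set S = w" using dyck_wd[OF fin disj] card wds by simp
  then show ?thesis using fin card disj by blast
qed


definition kids :: "(nat list \<times> ptree) list \<Rightarrow> (nat list \<times> ptree) list" where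
  "kids P = concat (map (\<lambda>(p, t). map (\<lambda>(i, c). (p @ [i], c))
      (zip [1..<Suc (length (children t))] (rev (children t)))) P)"

primrec plev :: "ptree \<Rightarrow> nat \<Rightarrow> (nat list \<times> ptree) list" where
  "plev T 0 = [([], T)]"
| "plev T (Suc d) = kids (plev T d)"

definition Zc :: "ptree list \<Rightarrow> (nat \<times> ptree) list" where
  "Zc ts = zip [1..<Suc (length ts)] (rev ts)"

lemma kids_append: "kids (P @ Q) = kids P @ kids Q"
  by (simp add: kids_def)

lemma kids_concat: "kids (concat Ps) = concat (map kids Ps)"
  by (induction Ps) (auto simp: kids_append kids_def)

lemma kids_prefix: "kids (map (\<lambda>(p, t). (i # p, t)) P) = map (\<lambda>(p, t). (i # p, t)) (kids P)"
  by (induction P) (auto simp: kids_def)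

lemma step_append: "(\<lambda>ts. concat (map (\<lambda>t. rev (children t)) ts)) (a @ b)
   = (\<lambda>ts. concat (map (\<lambda>t. rev (children t)) ts)) a @ (\<lambda>ts. concat (map (\<lambda>t. rev (children t)) ts)) b"
  by simp

lemma map_snd_kids: "map snd (kids P) = concat (map (\<lambda>t. rev (children t)) (map snd P))"
proof -
  have "\<And>p t. map snd (map (\<lambda>(i, c). (p @ [i], c)) (zip [1..<Suc (length (children t))] (rev (children t))))
      = rev (children t)"
  proof -
    fix p t
    have "map snd (map (\<lambda>(i, c). (p @ [i], c)) (zip [1..<Suc (length (children t))] (rev (children t))))
        = map snd (zip [1..<Suc (length (children t))] (rev (children t)))"
      by (induction "zip [1..<Suc (length (children t))] (rev (children t))") auto
    also have "\<dots> = rev (children t)" by (simp add: map_snd_zip del: upt_Suc)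
    finally show "?thesis p t" .
  qed
  then show ?thesis unfolding kids_def by (simp add: map_concat comp_def case_prod_beta)
qed

lemma plev_level: "map snd (plev T d) = level T d"
proof (induction d)
  case 0 then show ?case by (simp add: level_def)
next
  case (Suc d)
  then show ?case by (simp add: level_def map_snd_kids)
qed

lemma plev_node_Suc:
  "plev (Node ts) (Suc d) = concat (map (\<lambda>(i, c). map (\<lambda>(p, t). (i # p, t)) (plev c d)) (Zc ts))"
proof (induction d)
  case 0
  show ?case by (simp add: kids_def Zc_def case_prod_beta comp_def)
next
  case (Suc d)
  have "plev (Node ts) (Suc (Suc d)) = kids (plev (Node ts) (Suc d))" by simp
  also have "\<dots> = concat (map (\<lambda>(i, c). kids (map (\<lambda>(p, t). (i # p, t)) (plev c d))) (Zc ts))"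
    unfolding Suc kids_concat map_map by (intro arg_cong[where f=concat] map_cong) auto
  also have "\<dots> = concat (map (\<lambda>(i, c). map (\<lambda>(p, t). (i # p, t)) (plev c (Suc d))) (Zc ts))"
    by (simp add: kids_prefix)
  finally show ?case .
qed

lemma set_Zc: "(i, c) \<in> set (Zc ts) \<Longrightarrow> c \<in> set ts \<and> 1 \<le> i \<and> i \<le> length ts"
  unfolding Zc_def by (auto simp: in_set_zip simp del: upt_Suc dest: set_zip_rightD)
    (metis length_rev nth_mem set_rev)

lemma Zc_Cons: "Zc (t # ts) = Zc ts @ [(Suc (length ts), t)]"
  unfolding Zc_def by (simp del: upt_Suc add: upt_Suc_append zip_append)

lemma node_codes_list_set:
  "set (node_codes_list ts) = (\<Union>(i, c)\<in>set (Zc ts). insert [i] ((#) i ` set (node_codes c)))"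
proof (induction ts)
  case Nil then show ?case by (simp add: Zc_def)
next
  case (Cons t ts)
  show ?case unfolding Zc_Cons using Cons by (auto simp: Let_def)
qed

lemma H: "fst ` set (plev (Node ts) (Suc d)) = (\<Union>(i, c)\<in>set (Zc ts). (#) i ` fst ` set (plev c d))"
  unfolding plev_node_Suc by (force simp: image_iff)

lemma plev_codes:
  "set (node_codes T) = (\<Union>d. fst ` set (plev T (Suc d)))"
proof (induction T)
  case (Node ts)
  have IH: "\<And>c. c \<in> set ts \<Longrightarrow> set (node_codes c) = (\<Union>d. fst ` set (plev c (Suc d)))"
    using Node by simp
  have A: "\<And>c. (\<Union>d. fst ` set (plev c d)) = insert [] (\<Union>d. fst ` set (plev c (Suc d)))"
  proof -
    fix c
    show "(\<Union>d. fst ` set (plev c d)) = insert [] (\<Union>d. fst ` set (plev c (Suc d)))"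
    proof
      show "(\<Union>d. fst ` set (plev c d)) \<subseteq> insert [] (\<Union>d. fst ` set (plev c (Suc d)))"
      proof
        fix x assume "x \<in> (\<Union>d. fst ` set (plev c d))"
        then obtain d where d: "x \<in> fst ` set (plev c d)" by auto
        then show "x \<in> insert [] (\<Union>d. fst ` set (plev c (Suc d)))"
          by (cases d) auto
      qed
    next
      show "insert [] (\<Union>d. fst ` set (plev c (Suc d))) \<subseteq> (\<Union>d. fst ` set (plev c d))"
      proof
        fix x assume "x \<in> insert [] (\<Union>d. fst ` set (plev c (Suc d)))"
        then show "x \<in> (\<Union>d. fst ` set (plev c d))"
        proof
          assume "x = []" then have "x \<in> fst ` set (plev c 0)" by simp
          then show ?thesis by blast
        next
          assume "x \<in> (\<Union>d. fst ` set (plev c (Suc d)))"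
          then show ?thesis by blast
        qed
      qed
    qed
  qed
  have "(\<Union>d. fst ` set (plev (Node ts) (Suc d)))
      = (\<Union>d. \<Union>(i, c)\<in>set (Zc ts). (#) i ` fst ` set (plev c d))"
    unfolding H ..
  also have "\<dots> = (\<Union>(i, c)\<in>set (Zc ts). (#) i ` (\<Union>d. fst ` set (plev c d)))"
    by blast
  also have "\<dots> = (\<Union>(i, c)\<in>set (Zc ts). insert [i] ((#) i ` set (node_codes c)))"
  proof (rule SUP_cong[OF refl])
    fix x assume xZ: "x \<in> set (Zc ts)"
    obtain i c where x0: "x = (i, c)" by (cases x)
    then have x: "x = (i, c)" "c \<in> set ts" using set_Zc xZ by auto
    show "(case x of (i, c) \<Rightarrow> (#) i ` (\<Union>d. fst ` set (plev c d)))
        = (case x of (i, c) \<Rightarrow> insert [i] ((#) i ` set (node_codes c)))"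
      unfolding x using A[of c] IH[OF x(2)] by simp
  qed
  finally show ?case by (simp add: node_codes_list_set)
qed


lemma plev_nonempty_bound: "plev T d \<noteq> [] \<Longrightarrow> d \<le> num_nodes T"
proof (induction T arbitrary: d)
  case (Node ts)
  show ?case
  proof (cases d)
    case 0 then show ?thesis by simp
  next
    case (Suc d')
    from Node.prems have "plev (Node ts) (Suc d') \<noteq> []" unfolding Suc .
    then have "concat (map (\<lambda>(i, c). map (\<lambda>(p, t). (i # p, t)) (plev c d')) (Zc ts)) \<noteq> []"
      unfolding plev_node_Suc .
    then obtain i c where ic: "(i, c) \<in> set (Zc ts)" "plev c d' \<noteq> []"
      by (auto simp: concat_eq_Nil_conv)
    then have c: "c \<in> set ts" using set_Zc by blast
    have "d' \<le> num_nodes c" using Node.IH[OF c ic(2)] .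
    moreover have "Suc (num_nodes c) \<le> (\<Sum>t\<leftarrow>ts. Suc (num_nodes t))"
      by (rule member_le_sum_list) (use c in auto)
    ultimately show ?thesis using Suc by simp
  qed
qed

lemma plev_beyond: "plev T (Suc (num_nodes T)) = []"
  using plev_nonempty_bound[of T "Suc (num_nodes T)"] by auto

lemma fold_max_ge: "(a::nat) \<le> fold max xs a"
  by (induction xs arbitrary: a) (auto intro: le_trans[OF max.cobounded2])

lemma fold_max_mem: "(x::nat) \<in> set xs \<Longrightarrow> x \<le> fold max xs a"
proof (induction xs arbitrary: a)
  case (Cons y xs)
  then show ?case using fold_max_ge[of "max y a" xs] by (auto)
qed simp

lemma max_children_ge: "length ts \<le> max_children (Node ts)"
  using fold_max_ge by simp

lemma max_children_child: "c \<in> set ts \<Longrightarrow> max_children c \<le> max_children (Node ts)"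
  using fold_max_mem[of "max_children c" "map max_children ts" "length ts"] by simp

lemma plev_maxch: "(p, t) \<in> set (plev T d) \<Longrightarrow> length (children t) \<le> max_children T"
proof (induction T arbitrary: d p t)
  case (Node ts)
  show ?case
  proof (cases d)
    case 0 then show ?thesis using Node.prems max_children_ge by auto
  next
    case (Suc d')
    from Node.prems have "(p, t) \<in> set (plev (Node ts) (Suc d'))" unfolding Suc .
    then have "(p, t) \<in> set (concat (map (\<lambda>(i, c). map (\<lambda>(p, t). (i # p, t)) (plev c d')) (Zc ts)))"
      unfolding plev_node_Suc .
    then obtain i c p' where ic: "(i, c) \<in> set (Zc ts)" "(p', t) \<in> set (plev c d')"
      by auto
    then have c: "c \<in> set ts" using set_Zc by blast
    show ?thesis using Node.IH[OF c ic(2)] max_children_child[OF c] by simp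
  qed
qed

lemma plev_codes_prop:
  "(p, t) \<in> set (plev T d) \<Longrightarrow> length p = d \<and> (\<forall>c\<in>set p. 1 \<le> c \<and> c \<le> max_children T)"
proof (induction d arbitrary: p t)
  case 0 then show ?case by simp
next
  case (Suc d)
  then obtain q s i where qs: "(q, s) \<in> set (plev T d)"
    "(i, t) \<in> set (zip [1..<Suc (length (children s))] (rev (children s)))" "p = q @ [i]"
    by (auto simp: kids_def)
  have "i \<in> set [1..<Suc (length (children s))]" using qs(2) by (rule set_zip_leftD)
  then have "1 \<le> i" "i \<le> length (children s)" by auto
  moreover have "length (children s) \<le> max_children T" using plev_maxch[OF qs(1)] .
  ultimately show ?case using Suc.IH[OF qs(1)] qs(3) by auto
qed

lemma ncl_props:
  assumes "\<And>t. t \<in> set ts \<Longrightarrow> length (node_codes t) = num_nodes t \<and> distinct (node_codes t)"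
  shows "length (node_codes_list ts) = (\<Sum>t\<leftarrow>ts. Suc (num_nodes t)) \<and> distinct (node_codes_list ts)"
  using assms
proof (induction ts)
  case Nil then show ?case by simp
next
  case (Cons t ts)
  have IH: "length (node_codes_list ts) = (\<Sum>t\<leftarrow>ts. Suc (num_nodes t)) \<and> distinct (node_codes_list ts)"
    using Cons by simp
  have t: "length (node_codes t) = num_nodes t" "distinct (node_codes t)" using Cons.prems by auto
  have ne: "[] \<notin> set (node_codes t)"
    by (cases t) (auto simp: node_codes_list_set)
  have hd: "\<And>q. q \<in> set (node_codes_list ts) \<Longrightarrow> q \<noteq> [] \<and> hd q \<le> length ts"
    using set_Zc by (fastforce simp: node_codes_list_set)
  define c where "c = Suc (length ts)"
  have "node_codes_list (t # ts) = ([c] # map ((#) c) (node_codes t)) @ node_codes_list ts"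
    by (simp add: c_def Let_def)
  moreover have "distinct ([c] # map ((#) c) (node_codes t))"
    using t(2) ne by (auto simp: distinct_map)
  moreover have "set ([c] # map ((#) c) (node_codes t)) \<inter> set (node_codes_list ts) = {}"
    using hd c_def by fastforce
  ultimately show ?case using IH t(1) by simp
qed

lemma node_codes_props: "length (node_codes T) = num_nodes T \<and> distinct (node_codes T)"
proof (induction T)
  case (Node ts)
  then show ?case using ncl_props[of ts] by simp
qed

definition Nv :: "nat \<Rightarrow> nat list \<Rightarrow> nat" where
  "Nv m cs = foldl (\<lambda>a c. (m + 2) * a + c) 0 cs"

lemma Nv_Nil[simp]: "Nv m [] = 0" by (simp add: Nv_def)

lemma Nv_snoc[simp]: "Nv m (cs @ [c]) = (m + 2) * Nv m cs + c" by (simp add: Nv_def)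

lemma node_value_formula:
  "node_value m cs = real (length cs) + real (Nv m cs) / (real m + 2) ^ length cs"
proof (induction cs rule: rev_induct)
  case Nil then show ?case by (simp add: node_value_def)
next
  case (snoc c cs)
  define b :: real where "b = real m + 2"
  have b0: "b > 0" by (simp add: b_def)
  define L where "L = length cs"
  have s1: "(\<Sum>i=1..length (cs @ [c]). real ((cs @ [c]) ! (i - 1)) * b powi (- int i))
      = (\<Sum>i=1..L. real (cs ! (i - 1)) * b powi (- int i)) + real c * b powi (- int (Suc L))"
  proof -
    have "(\<Sum>i=1..Suc L. real ((cs @ [c]) ! (i - 1)) * b powi (- int i))
      = (\<Sum>i=1..L. real ((cs @ [c]) ! (i - 1)) * b powi (- int i)) + real ((cs @ [c]) ! L) * b powi (- int (Suc L))"
      by simp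
    moreover have "(\<Sum>i=1..L. real ((cs @ [c]) ! (i - 1)) * b powi (- int i))
        = (\<Sum>i=1..L. real (cs ! (i - 1)) * b powi (- int i))"
      by (rule sum.cong) (auto simp: nth_append L_def)
    ultimately show ?thesis by (simp add: L_def)
  qed
  have IH: "(\<Sum>i=1..L. real (cs ! (i - 1)) * b powi (- int i)) = real (Nv m cs) / b ^ L"
    using snoc unfolding node_value_def b_def L_def by simp
  have pw: "b powi (- int (Suc L)) = 1 / b ^ Suc L"
    by (simp only: power_int_minus power_int_of_nat inverse_eq_divide)
  have "node_value m (cs @ [c]) = real (Suc L) + (real (Nv m cs) / b ^ L + real c / b ^ Suc L)"
    unfolding node_value_def using s1 IH pw b_def L_def by simp
  also have "real (Nv m cs) / b ^ L + real c / b ^ Suc L = real (Nv m (cs @ [c])) / b ^ Suc L"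
  proof -
    have r: "real (Nv m (cs @ [c])) = b * real (Nv m cs) + real c" by (simp add: b_def algebra_simps)
    have bL: "b ^ L > 0" using b0 by simp
    show ?thesis unfolding r using b0 bL by (simp add: field_simps)
  qed
  finally show ?case by (simp add: b_def L_def)
qed

lemma Nv_upper: "\<forall>c\<in>set cs. c \<le> m + 1 \<Longrightarrow> Nv m cs < (m + 2) ^ length cs"
proof (induction cs rule: rev_induct)
  case Nil then show ?case by simp
next
  case (snoc c cs)
  then have "Nv m cs + 1 \<le> (m + 2) ^ length cs" "c \<le> m + 1" by auto
  then have "(m + 2) * Nv m cs + c < (m + 2) * (Nv m cs + 1)" by simp
  also have "\<dots> \<le> (m + 2) * (m + 2) ^ length cs" using \<open>Nv m cs + 1 \<le> _\<close> by (rule mult_le_mono2)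
  finally show ?case by simp
qed

lemma Nv_pos: "cs \<noteq> [] \<Longrightarrow> \<forall>c\<in>set cs. 1 \<le> c \<Longrightarrow> 0 < Nv m cs"
  by (induction cs rule: rev_induct) auto


lemma mw_single:
  assumes "\<forall>x\<in>set xs. y < x"
  shows "mw xs [y] = False # map (\<lambda>_. True) xs"
proof (cases xs)
  case Nil then show ?thesis by simp
next
  case (Cons x xs')
  then have "\<not> x < y" using assms by force
  then show ?thesis using Cons by simp
qed

lemma merge_block:
  fixes \<phi> :: "nat \<Rightarrow> real" and b :: nat
  assumes sm: "strict_mono \<phi>" and srt: "sorted_wrt (<) (map fst Q)" and eb: "\<forall>(a, e)\<in>set Q. e < b"
  shows "mw (concat (map (\<lambda>(a, e). map (\<lambda>i. \<phi> (b * a + i)) [1..<Suc e]) Q))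
            (map (\<lambda>(a, e). \<phi> (b * a)) Q)
       = concat (map (\<lambda>(a, e). False # replicate e True) Q)"
  using srt eb
proof (induction Q)
  case Nil then show ?case by simp
next
  case (Cons ae Q)
  obtain a e where ae: "ae = (a, e)" by (cases ae)
  define C where "C = map (\<lambda>i. \<phi> (b * a + i)) [1..<Suc e]"
  define R where "R = concat (map (\<lambda>(a, e). map (\<lambda>i. \<phi> (b * a + i)) [1..<Suc e]) Q)"
  define Y where "Y = map (\<lambda>(a, e). \<phi> (b * a)) Q"
  have eb1: "e < b" using Cons.prems(2) ae by auto
  have gt: "\<And>a' e'. (a', e') \<in> set Q \<Longrightarrow> a < a'" using Cons.prems(1) ae by force
  have smle: "\<And>x y. x < y \<Longrightarrow> \<phi> x < \<phi> y" using sm by (simp add: strict_mono_def)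
  have sep: "\<forall>u\<in>set C \<union> set [\<phi> (b * a)]. \<forall>v\<in>set R \<union> set Y. u < v"
  proof (intro ballI)
    fix u v assume u: "u \<in> set C \<union> set [\<phi> (b * a)]" and v: "v \<in> set R \<union> set Y"
    obtain k where k: "u = \<phi> k" "k \<le> b * a + e" using u C_def by auto
    obtain a' e' k' where v': "(a', e') \<in> set Q" "v = \<phi> k'" "b * a' \<le> k'"
      using v unfolding R_def Y_def by auto
    have "b * a + e < b * a'"
    proof -
      have "Suc a \<le> a'" using gt[OF v'(1)] by simp
      then have "b * Suc a \<le> b * a'" by (rule mult_le_mono2)
      then show ?thesis using eb1 by simp
    qed
    then have "k < k'" using k v' by simp
    then show "u < v" using k v' smle by simp
  qed
  have "mw (C @ R) ([\<phi> (b * a)] @ Y) = mw C [\<phi> (b * a)] @ mw R Y"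
    by (rule mw_append[OF sep])
  moreover have "mw C [\<phi> (b * a)] = False # replicate e True"
  proof -
    have "\<forall>x\<in>set C. \<phi> (b * a) < x" using C_def smle by auto
    then show ?thesis using mw_single C_def by (simp add: map_replicate_const)
  qed
  moreover have "mw R Y = concat (map (\<lambda>(a, e). False # replicate e True) Q)"
    using Cons R_def Y_def by simp
  ultimately show ?case using ae C_def R_def Y_def by simp
qed

lemma block_sorted:
  fixes b :: nat
  assumes "sorted_wrt (<) (map a P)" "\<forall>x\<in>set P. e x < b"
  shows "sorted_wrt (<) (concat (map (\<lambda>x. map (\<lambda>i. b * a x + i) [1..<Suc (e x)]) P))"
  using assms
proof (induction P)
  case Nil then show ?case by simp
next
  case (Cons x P)
  have blk: "sorted_wrt (<) (map (\<lambda>i. b * a x + i) [1..<Suc (e x)])"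
    unfolding sorted_wrt_map by (rule sorted_wrt_mono_rel[OF _ sorted_wrt_upt]) simp
  have sep: "\<forall>u\<in>set (map (\<lambda>i. b * a x + i) [1..<Suc (e x)]).
      \<forall>v\<in>set (concat (map (\<lambda>x. map (\<lambda>i. b * a x + i) [1..<Suc (e x)]) P)). u < v"
  proof (intro ballI)
    fix u v
    assume u: "u \<in> set (map (\<lambda>i. b * a x + i) [1..<Suc (e x)])"
      and v: "v \<in> set (concat (map (\<lambda>x. map (\<lambda>i. b * a x + i) [1..<Suc (e x)]) P))"
    obtain y i where y: "y \<in> set P" "v = b * a y + i" "1 \<le> i" using v by auto
    have "u \<le> b * a x + e x" using u by auto
    moreover have "a x < a y" using Cons.prems(1) y(1) by auto
    then have "b * Suc (a x) \<le> b * a y" by (intro mult_le_mono2) simp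
    ultimately show "u < v" using Cons.prems(2) y by simp
  qed
  show ?case using blk sep Cons by (simp add: sorted_wrt_append)
qed

lemma levels_sorted:
  fixes X :: "nat \<Rightarrow> real list"
  assumes "\<And>d. sorted_wrt (<) (X d)" "\<And>d x. x \<in> set (X d) \<Longrightarrow> real d < x \<and> x < real d + 1"
  shows "sorted_wrt (<) (concat (map X [a..<c]))"
proof (induction c)
  case 0 then show ?case by simp
next
  case (Suc c)
  show ?case
  proof (cases "a \<le> c")
    case True
    have "\<forall>u\<in>set (concat (map X [a..<c])). \<forall>v\<in>set (X c). u < v"
    proof (intro ballI)
      fix u v assume u: "u \<in> set (concat (map X [a..<c]))" and v: "v \<in> set (X c)"
      then obtain d where "d < c" "u \<in> set (X d)" by auto
      then have "u < real d + 1" "real d + 1 \<le> real c" using assms(2) by auto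
      then show "u < v" using assms(2)[OF v] by simp
    qed
    then show ?thesis using True Suc assms(1)[of c] by (simp add: sorted_wrt_append)
  next
    case False then show ?thesis by simp
  qed
qed

lemma chunks:
  fixes X Y :: "nat \<Rightarrow> real list"
  assumes hX: "\<And>d x. x \<in> set (X d) \<Longrightarrow> real d < x \<and> x < real d + 1"
    and hY: "\<And>d y. y \<in> set (Y d) \<Longrightarrow> real d + 1 < y \<and> y < real d + 2"
    and j: "1 \<le> j"
  shows "mw (concat (map X [j..<j + r])) (Y (j - 1) @ concat (map Y [j..<j + r]))
       = concat (map (\<lambda>d. mw (X d) (Y (d - 1))) [j..<j + r]) @ mw [] (Y (j + r - 1))"
  using j
proof (induction r arbitrary: j)
  case 0 then show ?case by simp
next
  case (Suc r)
  have u: "[j..<j + Suc r] = j # [Suc j..<Suc j + r]" by (simp add: upt_conv_Cons)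
  have lowX: "\<And>u. u \<in> set (X j) \<Longrightarrow> u < real j + 1" using hX by blast
  have lowY: "\<And>u. u \<in> set (Y (j - 1)) \<Longrightarrow> u < real j + 1"
  proof -
    fix u assume "u \<in> set (Y (j - 1))"
    then have "u < real (j - 1) + 2" using hY by blast
    moreover have "real (j - 1) = real j - 1" using Suc.prems by (simp add: of_nat_diff)
    ultimately show "u < real j + 1" by simp
  qed
  have hiX: "\<And>v. v \<in> set (concat (map X [Suc j..<Suc j + r])) \<Longrightarrow> real j + 1 < v"
  proof -
    fix v assume "v \<in> set (concat (map X [Suc j..<Suc j + r]))"
    then obtain d where d: "Suc j \<le> d" "v \<in> set (X d)" by (auto simp del: upt_Suc)
    then have "real j + 1 \<le> real d" by simp
    then show "real j + 1 < v" using hX[OF d(2)] by simp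
  qed
  have hiY0: "\<And>v d. j \<le> d \<Longrightarrow> v \<in> set (Y d) \<Longrightarrow> real j + 1 < v"
  proof -
    fix v d assume d: "j \<le> d" "v \<in> set (Y d)"
    then have "real j \<le> real d" by simp
    then show "real j + 1 < v" using hY[OF d(2)] by simp
  qed
  have hiY: "\<And>v. v \<in> set (Y j @ concat (map Y [Suc j..<Suc j + r])) \<Longrightarrow> real j + 1 < v"
  proof -
    fix v assume "v \<in> set (Y j @ concat (map Y [Suc j..<Suc j + r]))"
    then have "v \<in> set (Y j) \<or> (\<exists>d. Suc j \<le> d \<and> v \<in> set (Y d))" by (auto simp del: upt_Suc)
    then obtain d where d: "j \<le> d" "v \<in> set (Y d)" using Suc_leD by blast
    then show "real j + 1 < v" by (rule hiY0)
  qed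
  have sep: "\<forall>u\<in>set (X j) \<union> set (Y (j - 1)).
      \<forall>v\<in>set (concat (map X [Suc j..<Suc j + r])) \<union> set (Y j @ concat (map Y [Suc j..<Suc j + r])). u < v"
  proof (intro ballI)
    fix u v
    assume u: "u \<in> set (X j) \<union> set (Y (j - 1))"
      and v: "v \<in> set (concat (map X [Suc j..<Suc j + r])) \<union> set (Y j @ concat (map Y [Suc j..<Suc j + r]))"
    have "u < real j + 1" using u lowX lowY by blast
    moreover have "real j + 1 < v" using v hiX hiY by blast
    ultimately show "u < v" by simp
  qed
  have "mw (concat (map X [j..<j + Suc r])) (Y (j - 1) @ concat (map Y [j..<j + Suc r]))
      = mw (X j @ concat (map X [Suc j..<Suc j + r])) (Y (j - 1) @ (Y j @ concat (map Y [Suc j..<Suc j + r])))"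
    unfolding u by (simp del: upt_Suc)
  also have "\<dots> = mw (X j) (Y (j - 1)) @ mw (concat (map X [Suc j..<Suc j + r])) (Y j @ concat (map Y [Suc j..<Suc j + r]))"
    by (rule mw_append[OF sep])
  also have "mw (concat (map X [Suc j..<Suc j + r])) (Y j @ concat (map Y [Suc j..<Suc j + r]))
      = concat (map (\<lambda>d. mw (X d) (Y (d - 1))) [Suc j..<Suc j + r]) @ mw [] (Y (Suc j + r - 1))"
    using Suc.IH[of "Suc j"] by (simp del: upt_Suc)
  finally show ?case unfolding u by (simp del: upt_Suc)
qed


definition XL :: "ptree \<Rightarrow> nat \<Rightarrow> real list" where
  "XL T d = (if d = 0 then [] else map (node_value (max_children T) \<circ> fst) (plev T d))"

lemma map_fst_pre: "map (f \<circ> fst) (map (\<lambda>(i, c). (p @ [i], c)) z) = map (\<lambda>i. f (p @ [i])) (map fst z)"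
  by (induction z) auto

lemma map_kids_fst:
  "map (f \<circ> fst) (kids P) = concat (map (\<lambda>x. map (\<lambda>i. f (fst x @ [i])) [1..<Suc (length (children (snd x)))]) P)"
proof -
  have "\<And>p t. map (f \<circ> fst) (map (\<lambda>(i, c). (p @ [i], c)) (zip [1..<Suc (length (children t))] (rev (children t))))
      = map (\<lambda>i. f (p @ [i])) [1..<Suc (length (children t))]"
  proof -
    fix p t
    have "map (f \<circ> fst) (map (\<lambda>(i, c). (p @ [i], c)) (zip [1..<Suc (length (children t))] (rev (children t))))
      = map (\<lambda>i. f (p @ [i])) (map fst (zip [1..<Suc (length (children t))] (rev (children t))))"
      by (rule map_fst_pre)
    also have "map fst (zip [1..<Suc (length (children t))] (rev (children t))) = [1..<Suc (length (children t))]"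
      by (simp add: map_fst_zip del: upt_Suc)
    finally show "?thesis p t" .
  qed
  then show ?thesis unfolding kids_def map_concat by (simp add: comp_def case_prod_beta del: upt_Suc)
qed

lemma length_kids: "length (kids [(p, t)]) = length (children t)"
  by (simp add: kids_def del: upt_Suc)

lemma plev_value:
  assumes "(p, t) \<in> set (plev T d)"
  shows "node_value (max_children T) p = real d + real (Nv (max_children T) p) / (real (max_children T) + 2) ^ d"
  using node_value_formula plev_codes_prop[OF assms] by simp

lemma plev_Nv_bounds:
  assumes "(p, t) \<in> set (plev T d)" "1 \<le> d"
  shows "0 < Nv (max_children T) p" "Nv (max_children T) p < (max_children T + 2) ^ d"
proof -
  note c = plev_codes_prop[OF assms(1)]
  show "0 < Nv (max_children T) p" using c assms(2) by (intro Nv_pos) auto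
  show "Nv (max_children T) p < (max_children T + 2) ^ d" using c Nv_upper[of p "max_children T"] by fastforce
qed

lemma plev_value_bounds:
  assumes "(p, t) \<in> set (plev T d)" "1 \<le> d"
  shows "real d < node_value (max_children T) p" "node_value (max_children T) p < real d + 1"
proof -
  define B :: real where "B = (real (max_children T) + 2) ^ d"
  have B0: "B > 0" unfolding B_def by simp
  have v: "node_value (max_children T) p = real d + real (Nv (max_children T) p) / B"
    using plev_value[OF assms(1)] B_def by simp
  have "0 < real (Nv (max_children T) p)" using plev_Nv_bounds(1)[OF assms] by simp
  then show "real d < node_value (max_children T) p" using v B0 by simp
  have "real (Nv (max_children T) p) < real ((max_children T + 2) ^ d)"
    using plev_Nv_bounds(2)[OF assms] by linarith
  then have "real (Nv (max_children T) p) < B" unfolding B_def by (simp add: add.commute)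
  then show "node_value (max_children T) p < real d + 1" using v B0 by simp
qed

lemma plev_Nv_sorted: "sorted_wrt (<) (map (Nv (max_children T) \<circ> fst) (plev T d))"
proof (induction d)
  case 0 then show ?case by simp
next
  case (Suc d)
  have eq: "map (Nv (max_children T) \<circ> fst) (plev T (Suc d))
     = concat (map (\<lambda>x. map (\<lambda>i. (max_children T + 2) * (Nv (max_children T) \<circ> fst) x + i)
          [1..<Suc ((length \<circ> children \<circ> snd) x)]) (plev T d))"
    by (simp add: map_kids_fst del: upt_Suc)
  have bnd: "\<forall>x\<in>set (plev T d). (length \<circ> children \<circ> snd) x < max_children T + 2"
    using plev_maxch by fastforce
  show ?case unfolding eq by (rule block_sorted[OF Suc bnd])
qed

lemma XL_sorted: "sorted_wrt (<) (XL T d)"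
proof (cases "d = 0")
  case True then show ?thesis by (simp add: XL_def)
next
  case False
  define B :: real where "B = (real (max_children T) + 2) ^ d"
  have B0: "B > 0" unfolding B_def by simp
  have "XL T d = map (\<lambda>x. real d + real (Nv (max_children T) (fst x)) / B) (plev T d)"
    unfolding XL_def using False plev_value B_def by (auto intro!: map_cong)
  also have "sorted_wrt (<) \<dots>"
    using plev_Nv_sorted[of T d] B0 unfolding sorted_wrt_map
    by (elim sorted_wrt_mono_rel[rotated]) (simp_all add: divide_strict_right_mono)
  finally show ?thesis .
qed

lemma XL_bounds: "x \<in> set (XL T d) \<Longrightarrow> real d < x \<and> x < real d + 1"
  unfolding XL_def using plev_value_bounds
  by (auto split: if_splits)

lemma Y_bounds: "y \<in> set (map (\<lambda>x. x + 1) (XL T d)) \<Longrightarrow> real d + 1 < y \<and> y < real d + 2"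
  using XL_bounds by fastforce

definition xsall :: "ptree \<Rightarrow> real list" where
  "xsall T = concat (map (XL T) [1..<Suc (num_nodes T)])"

definition codes_all :: "ptree \<Rightarrow> nat list list" where
  "codes_all T = concat (map (\<lambda>d. map fst (plev T d)) [1..<Suc (num_nodes T)])"

lemma xsall_sorted: "sorted_wrt (<) (xsall T)"
  unfolding xsall_def by (rule levels_sorted[OF XL_sorted XL_bounds])

lemma xsall_codes: "xsall T = map (node_value (max_children T)) (codes_all T)"
  unfolding xsall_def codes_all_def map_concat
  by (intro arg_cong[where f=concat] map_cong) (auto simp: XL_def)

lemma set_codes_all: "set (codes_all T) = set (node_codes T)"
proof -
  have "set (codes_all T) = (\<Union>d\<in>{1..<Suc (num_nodes T)}. fst ` set (plev T d))"
    unfolding codes_all_def by (simp del: upt_Suc)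
  also have "\<dots> = (\<Union>d. fst ` set (plev T (Suc d)))"
  proof
    show "(\<Union>d\<in>{1..<Suc (num_nodes T)}. fst ` set (plev T d)) \<subseteq> (\<Union>d. fst ` set (plev T (Suc d)))"
    proof
      fix x assume "x \<in> (\<Union>d\<in>{1..<Suc (num_nodes T)}. fst ` set (plev T d))"
      then obtain d where d0: "d \<in> {1..<Suc (num_nodes T)}" "x \<in> fst ` set (plev T d)" by blast
      then have d: "1 \<le> d" "x \<in> fst ` set (plev T d)" by auto
      then obtain d' where "d = Suc d'" by (cases d) auto
      then show "x \<in> (\<Union>d. fst ` set (plev T (Suc d)))" using d by blast
    qed
  next
    show "(\<Union>d. fst ` set (plev T (Suc d))) \<subseteq> (\<Union>d\<in>{1..<Suc (num_nodes T)}. fst ` set (plev T d))"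
    proof
      fix x assume "x \<in> (\<Union>d. fst ` set (plev T (Suc d)))"
      then obtain d where d: "x \<in> fst ` set (plev T (Suc d))" by auto
      then have "plev T (Suc d) \<noteq> []" by auto
      then have "Suc d \<le> num_nodes T" by (rule plev_nonempty_bound)
      then show "x \<in> (\<Union>d\<in>{1..<Suc (num_nodes T)}. fst ` set (plev T d))" using d by force
    qed
  qed
  also have "\<dots> = set (node_codes T)" using plev_codes by simp
  finally show ?thesis .
qed

lemma set_xsall: "set (xsall T) = tree_set T"
  unfolding tree_set_def xsall_codes by (simp add: set_codes_all)

lemma tree_set_finite: "finite (tree_set T)"
  unfolding tree_set_def by simp

lemma sl_tree_set: "sorted_list_of_set (tree_set T) = xsall T"
  using sl_of_sorted[OF xsall_sorted] set_xsall by metis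

lemma card_tree_set: "card (tree_set T) = num_nodes T"
proof -
  have d: "distinct (xsall T)" using xsall_sorted strict_sorted_iff by blast
  then have "inj_on (node_value (max_children T)) (set (codes_all T))"
    unfolding xsall_codes by (simp add: distinct_map)
  then have "card (tree_set T) = card (set (node_codes T))"
    unfolding tree_set_def set_codes_all[symmetric] by (simp add: card_image)
  also have "\<dots> = num_nodes T" using node_codes_props distinct_card by metis
  finally show ?thesis .
qed

lemma length_xsall: "length (xsall T) = num_nodes T"
proof -
  have d: "distinct (xsall T)" using xsall_sorted strict_sorted_iff by blast
  then show ?thesis using distinct_card[OF d] set_xsall card_tree_set by metis
qed


lemma XL_Suc_struct:
  "XL T (Suc d) = concat (map (\<lambda>x. map (\<lambda>i. node_value (max_children T) (fst x @ [i]))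
      [1..<Suc (length (children (snd x)))]) (plev T d))"
  unfolding XL_def by (simp add: map_kids_fst del: upt_Suc)

lemma tree_disj: "tree_set T \<inter> shift1 (tree_set T) = {}"
proof (rule ccontr)
  define m where "m = max_children T"
  assume "tree_set T \<inter> shift1 (tree_set T) \<noteq> {}"
  then obtain x y where xy: "x \<in> tree_set T" "y \<in> tree_set T" "x = y + 1"
    unfolding shift1_def by auto
  obtain d where d: "x \<in> set (XL T d)" using xy(1) set_xsall unfolding xsall_def by auto
  obtain d' where d': "y \<in> set (XL T d')" using xy(2) set_xsall unfolding xsall_def by auto
  have "real d < x" "x < real d + 1" using XL_bounds[OF d] by auto
  moreover have "real d' < y" "y < real d' + 1" using XL_bounds[OF d'] by auto
  ultimately have "real d' < real d" "real d < real d' + 2" using xy(3) by auto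
  then have dd: "d = Suc d'" by linarith
  have d'1: "d' \<noteq> 0" using d' by (auto simp: XL_def split: if_splits)
  obtain p t i where pt: "(p, t) \<in> set (plev T d')" "1 \<le> i" "i \<le> length (children t)"
      "x = node_value m (p @ [i])"
    using d unfolding dd XL_Suc_struct m_def by auto
  obtain q s where qs: "(q, s) \<in> set (plev T d')" "y = node_value m q"
    using d' d'1 unfolding XL_def m_def by auto
  have lp: "length p = d'" "length q = d'" using plev_codes_prop pt(1) qs(1) by auto
  have im: "i < m + 2" using pt(3) plev_maxch[OF pt(1)] m_def by simp
  define B :: real where "B = real m + 2"
  have B0: "B > 0" using B_def by simp
  have "real (Suc d') + real (Nv m (p @ [i])) / B ^ Suc d' = real d' + real (Nv m q) / B ^ d' + 1"
    using xy(3) pt(4) qs(2) node_value_formula[of m "p @ [i]"] node_value_formula[of m q] lp B_def by simp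
  then have e1: "real (Nv m (p @ [i])) / B ^ Suc d' = real (Nv m q) / B ^ d'" by simp
  define N1 where "N1 = real (Nv m (p @ [i]))"
  define Nq where "Nq = real (Nv m q)"
  have e2: "N1 / B ^ Suc d' = Nq / B ^ d'" using e1 N1_def Nq_def by simp
  have Bp: "B ^ d' > 0" "B ^ Suc d' > 0" using B0 by auto
  have "N1 = (N1 / B ^ Suc d') * B ^ Suc d'" using Bp B0 by simp
  also have "\<dots> = (Nq / B ^ d') * (B * B ^ d')" using e2 by simp
  also have "\<dots> = B * Nq" using Bp by (simp add: field_simps)
  finally have "real (Nv m (p @ [i])) = B * real (Nv m q)" unfolding N1_def Nq_def .
  then have "real ((m + 2) * Nv m p + i) = real ((m + 2) * Nv m q)" unfolding B_def by (simp add: algebra_simps)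
  then have eq: "(m + 2) * Nv m p + i = (m + 2) * Nv m q" by (simp only: of_nat_eq_iff)
  have "((m + 2) * Nv m p + i) mod (m + 2) = i mod (m + 2)" by (rule mod_mult_self4)
  also have "\<dots> = i" using im by (rule mod_less)
  finally have "((m + 2) * Nv m p + i) mod (m + 2) = i" .
  moreover have "((m + 2) * Nv m q) mod (m + 2) = 0" by (rule mod_mult_self1_is_0)
  ultimately show False using eq pt(2) by simp
qed

definition gw :: "ptree \<Rightarrow> bool list" where
  "gw t = False # replicate (length (children t)) True"

definition fw :: "ptree \<Rightarrow> bool list" where
  "fw t = replicate (length (children t)) True @ [False]"

lemma local_merge:
  assumes "1 \<le> d"
  shows "mw (XL T (Suc d)) (map (\<lambda>x. x + 1) (XL T d)) = concat (map gw (level T d))"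
proof -
  define m where "m = max_children T"
  define B :: real where "B = real m + 2"
  have B0: "B > 0" using B_def by simp
  define \<phi> where "\<phi> = (\<lambda>k::nat. real (Suc d) + real k / B ^ Suc d)"
  define Q where "Q = map (\<lambda>x. (Nv m (fst x), length (children (snd x)))) (plev T d)"
  have sm: "strict_mono \<phi>" unfolding strict_mono_def \<phi>_def using B0
    by (auto intro!: divide_strict_right_mono)
  have srt: "sorted_wrt (<) (map fst Q)" using plev_Nv_sorted[of T d]
    unfolding Q_def m_def by (simp add: comp_def)
  have eb: "\<forall>(a, e)\<in>set Q. e < m + 2" using plev_maxch unfolding Q_def m_def by fastforce
  have X1: "XL T (Suc d) = concat (map (\<lambda>(a, e). map (\<lambda>i. \<phi> ((m + 2) * a + i)) [1..<Suc e]) Q)"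
    unfolding XL_Suc_struct Q_def map_map
  proof (intro arg_cong[where f=concat] map_cong refl)
    fix x assume x: "x \<in> set (plev T d)"
    obtain p t where pt: "x = (p, t)" by (cases x)
    have lp: "length p = d" using plev_codes_prop x pt by auto
    show "map (\<lambda>i. node_value (max_children T) (fst x @ [i])) [1..<Suc (length (children (snd x)))]
        = ((\<lambda>(a, e). map (\<lambda>i. \<phi> ((m + 2) * a + i)) [1..<Suc e]) \<circ>
           (\<lambda>x. (Nv m (fst x), length (children (snd x))))) x"
      using lp unfolding pt by (auto simp: node_value_formula \<phi>_def B_def m_def)
  qed
  have dnz: "d \<noteq> 0" using assms by simp
  have Y0: "map (\<lambda>x. x + 1) (XL T d) = map ((\<lambda>x. x + 1) \<circ> (node_value (max_children T) \<circ> fst)) (plev T d)"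
    unfolding XL_def using dnz by simp
  have Y1: "map (\<lambda>x. x + 1) (XL T d) = map (\<lambda>(a, e). \<phi> ((m + 2) * a)) Q"
    unfolding Y0 Q_def map_map
  proof (intro map_cong refl)
    fix x assume x: "x \<in> set (plev T d)"
    obtain p t where pt: "x = (p, t)" by (cases x)
    have lp: "length p = d" using plev_codes_prop x pt by auto
    have "node_value m p + 1 = real (Suc d) + real (Nv m p) / B ^ d"
      using lp node_value_formula[of m p] B_def by simp
    also have "\<dots> = \<phi> ((m + 2) * Nv m p)"
    proof -
      have r: "real ((m + 2) * Nv m p) = B * real (Nv m p)" by (simp add: B_def algebra_simps)
      have "B * real (Nv m p) / B ^ Suc d = real (Nv m p) / B ^ d" using B0 by simp
      then show ?thesis unfolding \<phi>_def r by simp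
    qed
    finally show "((\<lambda>x. x + 1) \<circ> (node_value (max_children T) \<circ> fst)) x
        = ((\<lambda>(a, e). \<phi> ((m + 2) * a)) \<circ> (\<lambda>x. (Nv m (fst x), length (children (snd x))))) x"
      unfolding pt m_def by simp
  qed
  have G1: "concat (map gw (level T d)) = concat (map (\<lambda>(a, e). False # replicate e True) Q)"
    unfolding plev_level[symmetric] Q_def map_map by (simp add: comp_def gw_def case_prod_beta)
  show ?thesis unfolding X1 Y1 G1 by (rule merge_block[OF sm srt eb])
qed

lemma X0: "XL T 0 = []" by (simp add: XL_def)

lemma XL_beyond: "XL T (Suc (num_nodes T)) = []"
  unfolding XL_def using plev_beyond by simp

lemma length_XL1: "length (XL T 1) = length (children T)"
  unfolding XL_def by (simp add: kids_def del: upt_Suc)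

lemma tree_mw:
  assumes n1: "1 \<le> num_nodes T"
  shows "mw (xsall T) (map (\<lambda>x. x + 1) (xsall T))
     = replicate (length (children T)) True @ concat (map (\<lambda>d. concat (map gw (level T d))) [1..<Suc (num_nodes T)])"
proof -
  define n where "n = num_nodes T"
  define X where "X = XL T"
  define Y where "Y = (\<lambda>d. map (\<lambda>x. x + 1) (XL T d))"
  define G where "G = (\<lambda>d. concat (map gw (level T d)))"
  have c: "mw (concat (map X [1..<1 + n])) (Y (1 - 1) @ concat (map Y [1..<1 + n]))
       = concat (map (\<lambda>d. mw (X d) (Y (d - 1))) [1..<1 + n]) @ mw [] (Y (1 + n - 1))"
    unfolding X_def Y_def by (rule chunks[OF XL_bounds Y_bounds le_refl])
  have lhs: "mw (concat (map X [1..<1 + n])) (Y (1 - 1) @ concat (map Y [1..<1 + n]))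
      = mw (xsall T) (map (\<lambda>x. x + 1) (xsall T))"
    unfolding xsall_def X_def Y_def n_def by (simp add: X0 map_concat comp_def del: upt_Suc)
  have u1: "[1..<1 + n] = 1 # map Suc [1..<n]" using n1 n_def by (simp add: upt_conv_Cons map_Suc_upt del: upt_Suc)
  have h1: "mw (X 1) (Y (1 - 1)) = replicate (length (children T)) True"
    unfolding X_def Y_def using length_XL1[of T] by (simp add: X0 map_replicate_const)
  have hS: "\<And>d. d \<in> set [1..<n] \<Longrightarrow> mw (X (Suc d)) (Y (Suc d - 1)) = G d"
    unfolding X_def Y_def G_def using local_merge by simp
  have hn: "mw [] (Y (1 + n - 1)) = G n"
  proof -
    have "mw [] (Y (1 + n - 1)) = mw (X (Suc n)) (Y n)" unfolding X_def n_def by (simp add: XL_beyond)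
    also have "\<dots> = G n" unfolding X_def Y_def G_def using local_merge n1 n_def by simp
    finally show ?thesis .
  qed
  have meq: "map (\<lambda>d. mw (X d) (Y (d - 1))) (map Suc [1..<n]) = map G [1..<n]"
    unfolding map_map by (rule map_cong[OF refl]) (use hS in simp)
  have "concat (map (\<lambda>d. mw (X d) (Y (d - 1))) [1..<1 + n]) @ mw [] (Y (1 + n - 1))
      = replicate (length (children T)) True @ concat (map G [1..<n]) @ G n"
    unfolding u1 list.map(2) concat.simps meq h1 hn by simp
  also have "concat (map G [1..<n]) @ G n = concat (map G [1..<Suc n])"
    using n1 n_def by (simp add: upt_Suc_append del: upt_Suc)
  finally show ?thesis using c lhs unfolding G_def n_def by simp
qed

lemma dyck_tree: "dyck_of_set (tree_set T) = mw (xsall T) (map (\<lambda>x. x + 1) (xsall T))"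
proof -
  have sx: "sorted_wrt (<) (xsall T)" by (rule xsall_sorted)
  have sy: "sorted_wrt (<) (map (\<lambda>x. x + 1) (xsall T))" using sx by (simp add: sorted_wrt_map)
  have s1: "set (xsall T) = tree_set T" by (rule set_xsall)
  have s2: "set (map (\<lambda>x. x + 1) (xsall T)) = shift1 (tree_set T)" using s1 by (simp add: shift1_def)
  have dj: "set (xsall T) \<inter> set (map (\<lambda>x. x + 1) (xsall T)) = {}" unfolding s1 s2 by (rule tree_disj)
  have "dyck_of_set (tree_set T) = map (\<lambda>z. z \<in> set (xsall T)) (sorted_list_of_set (set (xsall T) \<union> set (map (\<lambda>x. x + 1) (xsall T))))"
    unfolding dyck_of_set_def s1 s2 ..
  also have "\<dots> = mw (xsall T) (map (\<lambda>x. x + 1) (xsall T))" by (rule mw_sl[OF sx sy dj])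
  finally show ?thesis .
qed


lemma fg: "[False] @ concat (map fw rest) = concat (map gw rest) @ [False]"
  by (induction rest) (auto simp: fw_def gw_def)

lemma concat_map_concat: "concat (map g (concat (map A I))) = concat (map (\<lambda>d. concat (map g (A d))) I)"
  by (induction I) auto

lemma length_concat_cong: "(\<And>d. d \<in> set I \<Longrightarrow> length (A d) = length (B d)) \<Longrightarrow>
    length (concat (map A I)) = length (concat (map B I))"
  by (induction I) auto

lemma last_sl: "finite A \<Longrightarrow> A \<noteq> {} \<Longrightarrow> last (sorted_list_of_set A) = Max (A::real set)"
proof -
  assume fA: "finite A" and ne: "A \<noteq> {}"
  define L where "L = sorted_list_of_set A"
  have sL: "sorted L" "set L = A" using fA L_def by auto
  then have Lne: "L \<noteq> []" using ne by auto
  have "L = butlast L @ [last L]" using Lne by simp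
  then have "\<forall>x\<in>set (butlast L). x \<le> last L" using sL(1) by (metis sorted_append list.set_intros(1))
  then have "\<forall>x\<in>A. x \<le> last L" using sL(2) \<open>L = butlast L @ [last L]\<close>
    by (metis Un_iff empty_iff empty_set order.refl set_ConsD set_append)
  moreover have "last L \<in> A" using Lne sL(2) by auto
  ultimately show ?thesis unfolding L_def[symmetric] by (intro Max_eqI[symmetric] fA) auto
qed

lemma last_dyck:
  assumes "finite S" "S \<noteq> {}" "S \<inter> shift1 S = {}"
  shows "dyck_of_set S \<noteq> [] \<and> last (dyck_of_set S) = False"
proof -
  define A where "A = S \<union> shift1 S"
  have fA: "finite A" using assms(1) A_def shift1_def by simp
  have neA: "A \<noteq> {}" using assms(2) A_def by simp
  have MA: "Max A = Max S + 1"
  proof (rule Max_eqI[OF fA])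
    fix y assume "y \<in> A"
    then have "y \<in> S \<or> (\<exists>s\<in>S. y = s + 1)" using A_def shift1_def by auto
    then show "y \<le> Max S + 1" using Max_ge[OF assms(1)] by force
  next
    show "Max S + 1 \<in> A" using assms(1,2) A_def shift1_def by auto
  qed
  have "Max S + 1 \<in> shift1 S" using Max_in[OF assms(1,2)] unfolding shift1_def by auto
  then have "Max S + 1 \<notin> S" using assms(3) by blast
  moreover have "sorted_list_of_set A \<noteq> []" using fA neA by simp
  ultimately show ?thesis unfolding dyck_of_set_def A_def[symmetric]
    using last_sl[OF fA neA] MA by (simp add: last_map)
qed

theorem xi_bounce_eq:
  assumes n1: "1 \<le> num_nodes T"
  shows "Xi_bounce T = dyck_of_set (tree_set T)"
proof -
  define n where "n = num_nodes T"
  define rest where "rest = concat (map (level T) [1..<Suc n])"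
  have bfs: "bfs_list T = T # rest"
    unfolding bfs_list_def rest_def n_def by (simp add: upt_conv_Cons level_def del: upt_Suc)
  have "concat (map fw (bfs_list T)) = replicate (length (children T)) True @ ([False] @ concat (map fw rest))"
    unfolding bfs by (simp add: fw_def)
  also have "\<dots> = replicate (length (children T)) True @ concat (map gw rest) @ [False]"
    unfolding fg by simp
  also have "concat (map gw rest) = concat (map (\<lambda>d. concat (map gw (level T d))) [1..<Suc n])"
    unfolding rest_def by (rule concat_map_concat)
  finally have W: "concat (map fw (bfs_list T)) = dyck_of_set (tree_set T) @ [False]"
    using tree_mw[OF n1] dyck_tree n_def by simp
  have "length rest = length (concat (map (XL T) [1..<Suc n]))"
    unfolding rest_def
    by (rule length_concat_cong) (simp add: plev_level[symmetric] XL_def del: upt_Suc)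
  also have "\<dots> = n" using length_xsall unfolding xsall_def n_def .
  finally have lb: "length (bfs_list T) = Suc n" using bfs by simp
  have "take (Suc n) (bfs_list T) = take n (bfs_list T) @ [bfs_list T ! n]"
    by (rule take_Suc_conv_app_nth) (simp add: lb)
  moreover have "take (Suc n) (bfs_list T) = bfs_list T" using lb by (simp add: take_all)
  ultimately have "bfs_list T = take n (bfs_list T) @ [bfs_list T ! n]" by simp
  then have "concat (map fw (bfs_list T)) = Xi_bounce T @ fw (bfs_list T ! n)"
    unfolding Xi_bounce_def fw_def n_def by (metis (no_types, lifting) concat_append concat.simps map_append
        list.map append_Nil2)
  then have "Xi_bounce T @ replicate (length (children (bfs_list T ! n))) True @ [False]
      = dyck_of_set (tree_set T) @ [False]" using W by (simp add: fw_def)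
  then have E: "Xi_bounce T @ replicate (length (children (bfs_list T ! n))) True = dyck_of_set (tree_set T)"
    by simp
  have ne: "tree_set T \<noteq> {}" using card_tree_set[of T] n1 by auto
  have ld: "dyck_of_set (tree_set T) \<noteq> [] \<and> last (dyck_of_set (tree_set T)) = False"
    using last_dyck[OF tree_set_finite ne tree_disj] .
  have "length (children (bfs_list T ! n)) = 0"
  proof (rule ccontr)
    assume "length (children (bfs_list T ! n)) \<noteq> 0"
    then obtain k where "length (children (bfs_list T ! n)) = Suc k" by (cases "length (children (bfs_list T ! n))") auto
    then have "last (Xi_bounce T @ replicate (length (children (bfs_list T ! n))) True) = True"
      by (simp add: last_append replicate_append_same[symmetric] del: replicate_append_same)
    then show False using E ld by simp
  qed
  then show ?thesis using E by simp
qed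


lemma poset_iso_refl: "poset_iso n P P"
  unfolding poset_iso_def by (intro exI[of _ id]) auto

lemma phi_eq:
  assumes "finite S0" "card S0 = n" "S0 \<inter> shift1 S0 = {}"
  shows "phi n (iso_class n (uip_rel S0)) = dyck_of_set S0"
proof -
  define P where "P = (\<lambda>S. finite S \<and> card S = n \<and> S \<inter> shift1 S = {} \<and> uip_rel S \<in> iso_class n (uip_rel S0))"
  have "P S0" unfolding P_def iso_class_def using assms uip_rel_sub[of S0] poset_iso_refl by auto
  then have PS: "P (SOME S. P S)" by (rule someI)
  define S where "S = (SOME S. P S)"
  have PS': "P S" using PS S_def by simp
  have S: "finite S" "card S = n" "S \<inter> shift1 S = {}" "poset_iso n (uip_rel S0) (uip_rel S)"
    using PS' unfolding P_def iso_class_def by auto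
  have "DL S0 = DL S" by (rule iso_DL_eq[OF assms(1) S(1) assms(2) S(2) S(4)])
  then have "dyck_of_set S = dyck_of_set S0"
    using dyck_wd[OF S(1) S(3)] dyck_wd[OF assms(1) assms(3)] S(2) assms(2) by simp
  moreover have "phi n (iso_class n (uip_rel S0)) = dyck_of_set S"
    unfolding phi_def S_def P_def by simp
  ultimately show ?thesis by simp
qed

lemma UIP_rep:
  assumes "C \<in> UIP n"
  shows "\<exists>S. finite S \<and> card S = n \<and> S \<inter> shift1 S = {} \<and> C = iso_class n (uip_rel S)"
proof -
  obtain S1 where S1: "C = iso_class n (uip_rel S1)" "finite S1" "card S1 = n"
    using assms unfolding UIP_def by auto
  obtain S' where "finite S'" "card S' = card S1" "S' \<inter> shift1 S' = {}" "uip_rel S' = uip_rel S1"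
    using perturb[OF S1(2)] by blast
  then show ?thesis using S1 by metis
qed

lemma dyck_in_Dyck:
  assumes "finite S" "card S = n" "S \<inter> shift1 S = {}"
  shows "dyck_of_set S \<in> Dyck n"
proof -
  have w: "dyck_of_set S = wd 0 (DL S) n" using dyck_wd[OF assms(1,3)] assms(2) by simp
  have srt: "sorted (0 # DL S)" using DL_sorted[OF assms(1)] by simp
  have le: "\<forall>c\<in>set (DL S). c \<le> n" using DL_le[OF assms(1)] assms(2) by auto
  have len: "length (DL S) = n" using length_DL[OF assms(1)] assms(2) by simp
  have bnd: "\<forall>j<length (DL S). DL S ! j \<le> 0 + j" using DL_bound[OF assms(1)] len assms(2) by simp
  have "length (wd 0 (DL S) n) = 2 * n" using wd_length[OF srt le] len by simp
  moreover have "count_list (wd 0 (DL S) n) True = n" using wd_countT len by simp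
  moreover have "\<forall>k\<le>length (wd 0 (DL S) n). count_list (take k (wd 0 (DL S) n)) False
      \<le> count_list (take k (wd 0 (DL S) n)) True"
    using wd_prefix[OF srt bnd _ order.refl, of n] len by simp
  ultimately show ?thesis unfolding w Dyck_def by simp
qed

theorem mainTheorem3:
  fixes n :: nat
  assumes "n \<ge> 1"
  shows "(\<forall>T. num_nodes T = n \<longrightarrow> phi n (Xi_poset T) = Xi_bounce T)
         \<and> bij_betw (phi n) (UIP n) (Dyck n)"
proof
  show "\<forall>T. num_nodes T = n \<longrightarrow> phi n (Xi_poset T) = Xi_bounce T"
  proof (intro allI impI)
    fix T assume T: "num_nodes T = n"
    have "phi n (Xi_poset T) = phi n (iso_class n (uip_rel (tree_set T)))"
      unfolding Xi_poset_def T ..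
    also have "\<dots> = dyck_of_set (tree_set T)"
      by (rule phi_eq[OF tree_set_finite _ tree_disj]) (simp add: card_tree_set T)
    also have "\<dots> = Xi_bounce T" using xi_bounce_eq[of T] T assms by simp
    finally show "phi n (Xi_poset T) = Xi_bounce T" .
  qed
next
  show "bij_betw (phi n) (UIP n) (Dyck n)"
    unfolding bij_betw_def
  proof (intro conjI)
    show "inj_on (phi n) (UIP n)"
    proof (rule inj_onI)
      fix C1 C2 assume C1: "C1 \<in> UIP n" and C2: "C2 \<in> UIP n" and eq: "phi n C1 = phi n C2"
      obtain S1 where S1: "finite S1" "card S1 = n" "S1 \<inter> shift1 S1 = {}" "C1 = iso_class n (uip_rel S1)"
        using UIP_rep[OF C1] by blast
      obtain S2 where S2: "finite S2" "card S2 = n" "S2 \<inter> shift1 S2 = {}" "C2 = iso_class n (uip_rel S2)"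
        using UIP_rep[OF C2] by blast
      have "wd 0 (DL S1) n = wd 0 (DL S2) n"
        using eq phi_eq[OF S1(1-3)] phi_eq[OF S2(1-3)] S1(4) S2(4)
          dyck_wd[OF S1(1) S1(3)] dyck_wd[OF S2(1) S2(3)] S1(2) S2(2) by simp
      then have "DL S1 = DL S2"
        using wd_inj DL_sorted[OF S1(1)] DL_sorted[OF S2(1)] by auto
      then have "uip_rel S1 = uip_rel S2" using DL_rel_eq[OF S1(1) S2(1)] S1(2) S2(2) by simp
      then show "C1 = C2" using S1(4) S2(4) by simp
    qed
  next
    show "phi n ` UIP n = Dyck n"
    proof
      show "phi n ` UIP n \<subseteq> Dyck n"
      proof
        fix w assume "w \<in> phi n ` UIP n"
        then obtain C where C: "C \<in> UIP n" "w = phi n C" by auto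
        obtain S where S: "finite S" "card S = n" "S \<inter> shift1 S = {}" "C = iso_class n (uip_rel S)"
          using UIP_rep[OF C(1)] by blast
        have "w = dyck_of_set S" using C(2) S(4) phi_eq[OF S(1-3)] by simp
        then show "w \<in> Dyck n" using dyck_in_Dyck[OF S(1-3)] by simp
      qed
    next
      show "Dyck n \<subseteq> phi n ` UIP n"
      proof
        fix w assume "w \<in> Dyck n"
        then obtain S where S: "finite S" "card S = n" "S \<inter> shift1 S = {}" "dyck_of_set S = w"
          using surj_dyck by blast
        have "iso_class n (uip_rel S) \<in> UIP n" unfolding UIP_def using S by auto
        moreover have "phi n (iso_class n (uip_rel S)) = w" using phi_eq[OF S(1-3)] S(4) by simp
        ultimately show "w \<in> phi n ` UIP n" by force
      qed
    qed
  qed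
qed


end
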